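(* For each $\otimes\in\{\mathrm{del},\mathrm{add},\mathrm{edit}\}$, every problem $\textsc{RM}^{\otimes}_{\mathrm{arb}}(\phi)$ with $\phi$ of the form $\exists x_1\cdots\exists x_c\forall y\,\psi$ ($c\ge 0$, $\psi$ quantifier-free) lies in $\mathrm{TC}^0$; i.e. $\textsc{RM}^{\otimes}_{\mathrm{arb}}(e^*a)\subseteq\mathrm{TC}^0$.
   Context: A relational vocabulary $\tau=\{R_1,\dots,R_r\}$ assigns arity $a_i$ to $R_i$; a finite $\tau$-structure $\mathcal A=(A,R_1^{\mathcal A},\dots,R_r^{\mathcal A})$ has $R_i^{\mathcal A}\subseteq A^{a_i}$ (ordered). A modulator is $S=(S_1,\dots,S_r)$, $S_i\subseteq A^{a_i}$; deletion modulator if $S_i\subseteq R_i^{\mathcal A}$, addition modulator if $S_i\cap R_i^{\mathcal A}=\emptyset$; $\mathcal A\triangleright S=(A,R_1^{\mathcal A}\triangle S_1,\dots,R_r^{\mathcal A}\triangle S_r)$, $\|S\|=\sum_i|S_i|$. $\textsc{RM}^{\mathrm{edit}}_{\mathrm{arb}}(\phi)$: given $\mathcal A$ and $k\in\mathbb N$, is there a modulator $S$ with $\|S\|\le k$ and $\mathcal A\triangleright S\models\phi$; del/add versions require a deletion/addition modulator. $\mathrm{TC}^0$ is the class of problems decided by constant-depth polynomial-size unbounded fan-in circuits with and/or/not and threshold gates. *)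

theory Defs
  imports Main
begin

text \<open>A vocabulary is a list of arities ar (relation symbol i has arity ar!i, i < length ar).
A finite structure with universe {0..<n} is a function R mapping i to a set of tuples
(lists of length ar!i over {0..<n}).\<close>

definition tuples :: "nat \<Rightarrow> nat \<Rightarrow> nat list set" where
  "tuples n a = {t. length t = a \<and> set t \<subseteq> {0..<n}}"

definition is_rel_family :: "nat list \<Rightarrow> nat \<Rightarrow> (nat \<Rightarrow> nat list set) \<Rightarrow> bool" where
  "is_rel_family ar n R \<longleftrightarrow> (\<forall>i < length ar. R i \<subseteq> tuples n (ar ! i))"

text \<open>Modulators are relation families as well; norm = sum of cardinalities.\<close>
definition mod_norm :: "nat list \<Rightarrow> (nat \<Rightarrow> nat list set) \<Rightarrow> nat" where
  "mod_norm ar S = (\<Sum>i<length ar. card (S i))"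

definition apply_mod :: "(nat \<Rightarrow> nat list set) \<Rightarrow> (nat \<Rightarrow> nat list set) \<Rightarrow> (nat \<Rightarrow> nat list set)" where
  "apply_mod R S = (\<lambda>i. (R i - S i) \<union> (S i - R i))"

datatype mode = Del | Add | Edit

definition mode_ok :: "mode \<Rightarrow> nat list \<Rightarrow> (nat \<Rightarrow> nat list set) \<Rightarrow> (nat \<Rightarrow> nat list set) \<Rightarrow> bool" where
  "mode_ok m ar R S = (case m of
      Del \<Rightarrow> (\<forall>i < length ar. S i \<subseteq> R i)
    | Add \<Rightarrow> (\<forall>i < length ar. S i \<inter> R i = {})
    | Edit \<Rightarrow> True)"

datatype qf = Atom nat "nat list" | Eq nat nat | Neg qf | Conj qf qf | Disj qf qf

fun qf_sem :: "(nat \<Rightarrow> nat list set) \<Rightarrow> (nat \<Rightarrow> nat) \<Rightarrow> qf \<Rightarrow> bool" where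
  "qf_sem R v (Atom i xs) = (map v xs \<in> R i)"
| "qf_sem R v (Eq x y) = (v x = v y)"
| "qf_sem R v (Neg f) = (\<not> qf_sem R v f)"
| "qf_sem R v (Conj f g) = (qf_sem R v f \<and> qf_sem R v g)"
| "qf_sem R v (Disj f g) = (qf_sem R v f \<or> qf_sem R v g)"

text \<open>psi is well formed for the sentence  Ex x_0 ... Ex x_(c-1) All y. psi  with y = variable c:
all variables are at most c and atoms respect the vocabulary.\<close>
fun qf_wf :: "nat list \<Rightarrow> nat \<Rightarrow> qf \<Rightarrow> bool" where
  "qf_wf ar c (Atom i xs) = (i < length ar \<and> length xs = ar ! i \<and> (\<forall>x\<in>set xs. x \<le> c))"
| "qf_wf ar c (Eq x y) = (x \<le> c \<and> y \<le> c)"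
| "qf_wf ar c (Neg f) = qf_wf ar c f"
| "qf_wf ar c (Conj f g) = (qf_wf ar c f \<and> qf_wf ar c g)"
| "qf_wf ar c (Disj f g) = (qf_wf ar c f \<and> qf_wf ar c g)"

definition sat_EA :: "nat \<Rightarrow> (nat \<Rightarrow> nat list set) \<Rightarrow> nat \<Rightarrow> qf \<Rightarrow> bool" where
  "sat_EA n R c psi \<longleftrightarrow>
     (\<exists>xs. length xs = c \<and> set xs \<subseteq> {0..<n} \<and>
        (\<forall>y < n. qf_sem R (\<lambda>j. (xs @ [y]) ! j) psi))"

definition RM :: "mode \<Rightarrow> nat list \<Rightarrow> nat \<Rightarrow> qf \<Rightarrow> nat \<Rightarrow> (nat \<Rightarrow> nat list set) \<Rightarrow> nat \<Rightarrow> bool" where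
  "RM m ar c psi n R k \<longleftrightarrow>
     (\<exists>S. is_rel_family ar n S \<and> mode_ok m ar R S \<and> mod_norm ar S \<le> k \<and>
          sat_EA n (apply_mod R S) c psi)"

fun tuple_list :: "nat \<Rightarrow> nat \<Rightarrow> nat list list" where
  "tuple_list n 0 = [[]]"
| "tuple_list n (Suc a) = concat (map (\<lambda>x. map (\<lambda>t. x # t) (tuple_list n a)) [0..<n])"

definition rel_bits :: "nat list \<Rightarrow> nat \<Rightarrow> (nat \<Rightarrow> nat list set) \<Rightarrow> bool list" where
  "rel_bits ar n R = concat (map (\<lambda>i. map (\<lambda>t. t \<in> R i) (tuple_list n (ar ! i))) [0..<length ar])"

definition bits_val :: "bool list \<Rightarrow> nat" where
  "bits_val bs = (\<Sum>i<length bs. if bs ! i then 2 ^ i else 0)"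

text \<open>Instance (A,k): n in unary, a separator, the characteristic bit vectors of the relations
(lexicographic tuple order), then k in binary (least significant bit first).\<close>
definition RM_lang :: "mode \<Rightarrow> nat list \<Rightarrow> nat \<Rightarrow> qf \<Rightarrow> bool list set" where
  "RM_lang m ar c psi = {w. \<exists>n R kb. 0 < n \<and> is_rel_family ar n R \<and>
      w = replicate n True @ [False] @ rel_bits ar n R @ kb \<and> RM m ar c psi n R (bits_val kb)}"

text \<open>A circuit is a list of gates; gate j may only refer to gates with index < j.
The output is the last gate.\<close>
datatype gate = GIn nat | GConst bool | GNot nat | GAnd "nat list" | GOr "nat list"
  | GThr nat "nat list"

fun gate_val :: "bool list \<Rightarrow> bool list \<Rightarrow> gate \<Rightarrow> bool" where
  "gate_val w vs (GIn i) = w ! i"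
| "gate_val w vs (GConst b) = b"
| "gate_val w vs (GNot j) = (\<not> vs ! j)"
| "gate_val w vs (GAnd js) = (\<forall>j\<in>set js. vs ! j)"
| "gate_val w vs (GOr js) = (\<exists>j\<in>set js. vs ! j)"
| "gate_val w vs (GThr t js) = (t \<le> length (filter (\<lambda>j. vs ! j) js))"

fun gate_depth :: "nat list \<Rightarrow> gate \<Rightarrow> nat" where
  "gate_depth ds (GIn i) = 0"
| "gate_depth ds (GConst b) = 0"
| "gate_depth ds (GNot j) = Suc (ds ! j)"
| "gate_depth ds (GAnd js) = Suc (foldr max (map (\<lambda>j. ds ! j) js) 0)"
| "gate_depth ds (GOr js) = Suc (foldr max (map (\<lambda>j. ds ! j) js) 0)"
| "gate_depth ds (GThr t js) = Suc (foldr max (map (\<lambda>j. ds ! j) js) 0)"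

fun gate_wf :: "nat \<Rightarrow> nat \<Rightarrow> gate \<Rightarrow> bool" where
  "gate_wf m p (GIn i) = (i < m)"
| "gate_wf m p (GConst b) = True"
| "gate_wf m p (GNot j) = (j < p)"
| "gate_wf m p (GAnd js) = (\<forall>j\<in>set js. j < p)"
| "gate_wf m p (GOr js) = (\<forall>j\<in>set js. j < p)"
| "gate_wf m p (GThr t js) = (\<forall>j\<in>set js. j < p)"

definition circ_wf :: "nat \<Rightarrow> gate list \<Rightarrow> bool" where
  "circ_wf m gs \<longleftrightarrow> gs \<noteq> [] \<and> (\<forall>p < length gs. gate_wf m p (gs ! p))"

definition circ_vals :: "bool list \<Rightarrow> gate list \<Rightarrow> bool list" where
  "circ_vals w gs = foldl (\<lambda>vs g. vs @ [gate_val w vs g]) [] gs"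

definition circ_out :: "bool list \<Rightarrow> gate list \<Rightarrow> bool" where
  "circ_out w gs = last (circ_vals w gs)"

definition circ_depth :: "gate list \<Rightarrow> nat" where
  "circ_depth gs = foldr max (foldl (\<lambda>ds g. ds @ [gate_depth ds g]) [] gs) 0"

definition TC0 :: "bool list set \<Rightarrow> bool" where
  "TC0 L \<longleftrightarrow> (\<exists>d e. \<exists>C :: nat \<Rightarrow> gate list. \<forall>m.
      circ_wf m (C m) \<and> length (C m) \<le> m ^ e + e \<and> circ_depth (C m) \<le> d \<and>
      (\<forall>w. length w = m \<longrightarrow> (circ_out w (C m) \<longleftrightarrow> w \<in> L)))"

end

theory Submission
  imports Defs
begin

datatype fm = FIn nat | FNot fm | FThr nat "nat list" "fm list"

definition bt :: "bool list \<Rightarrow> nat \<Rightarrow> bool" where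
  "bt w p = (p < length w \<and> w ! p)"

fun feval :: "bool list \<Rightarrow> fm \<Rightarrow> bool" where
  "feval w (FIn p) = bt w p"
| "feval w (FNot f) = (\<not> feval w f)"
| "feval w (FThr t ws fs) = (t \<le> sum_list (map2 (\<lambda>k b. if b then k else 0) ws (map (feval w) fs)))"

fun fsize :: "fm \<Rightarrow> nat" where
  "fsize (FIn p) = 1"
| "fsize (FNot f) = Suc (fsize f)"
| "fsize (FThr t ws fs) = Suc (sum_list (map fsize fs))"

fun fdepth :: "fm \<Rightarrow> nat" where
  "fdepth (FIn p) = 0"
| "fdepth (FNot f) = Suc (fdepth f)"
| "fdepth (FThr t ws fs) = Suc (foldr max (map fdepth fs) 0)"

lemma fsize_pos: "fsize f \<ge> 1"
  by (cases f) auto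

fun outs :: "nat \<Rightarrow> fm list \<Rightarrow> nat list" where
  "outs b0 [] = []"
| "outs b0 (f # fs) = (b0 + fsize f - 1) # outs (b0 + fsize f) fs"

fun comp :: "nat \<Rightarrow> nat \<Rightarrow> fm \<Rightarrow> gate list"
and comps :: "nat \<Rightarrow> nat \<Rightarrow> fm list \<Rightarrow> gate list" where
  "comp m b0 (FIn p) = [if p < m then GIn p else GConst False]"
| "comp m b0 (FNot f) = comp m b0 f @ [GNot (b0 + fsize f - 1)]"
| "comp m b0 (FThr t ws fs) = comps m b0 fs @ [GThr t (concat (map2 replicate ws (outs b0 fs)))]"
| "comps m b0 [] = []"
| "comps m b0 (f # fs) = comp m b0 f @ comps m (b0 + fsize f) fs"

lemma length_comp:
  "length (comp m b0 f) = fsize f" "length (comps m b0 fs) = sum_list (map fsize fs)"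
  by (induction m b0 f and m b0 fs rule: comp_comps.induct) auto

definition vfrom :: "bool list \<Rightarrow> bool list \<Rightarrow> gate list \<Rightarrow> bool list" where
  "vfrom w vs gs = foldl (\<lambda>vs g. vs @ [gate_val w vs g]) vs gs"

lemma vfrom_simps[simp]:
  "vfrom w vs [] = vs"
  "vfrom w vs (gs1 @ gs2) = vfrom w (vfrom w vs gs1) gs2"
  "vfrom w vs [g] = vs @ [gate_val w vs g]"
  by (auto simp: vfrom_def)

lemma vfrom_prefix: "length (vfrom w vs gs) = length vs + length gs \<and> take (length vs) (vfrom w vs gs) = vs"
  by (induction gs arbitrary: vs rule: rev_induct) (auto simp: vfrom_def)

lemma vfrom_nth: "i < length vs \<Longrightarrow> vfrom w vs gs ! i = vs ! i"
  using vfrom_prefix[of w vs gs] by (metis nth_take)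

lemma filter_concat_rep:
  "length (filter P (concat (map2 replicate ws js))) = sum_list (map2 (\<lambda>k b. if b then k else 0) ws (map P js))"
proof (induction ws arbitrary: js)
  case Nil then show ?case by simp
next
  case (Cons a ws)
  have r: "length (filter P (replicate a j)) = (if P j then a else 0)" for j
    by (induction a) auto
  show ?case using Cons r by (cases js) auto
qed

lemma length_outs: "length (outs b0 fs) = length fs"
  by (induction fs arbitrary: b0) auto

lemma comp_correct:
  "length w = m \<Longrightarrow> length vs = b0 \<Longrightarrow> vfrom w vs (comp m b0 f) ! (b0 + fsize f - 1) = feval w f"
  "length w = m \<Longrightarrow> length vs = b0 \<Longrightarrow> map (\<lambda>j. vfrom w vs (comps m b0 fs) ! j) (outs b0 fs) = map (feval w) fs"
proof (induction m b0 f and m b0 fs arbitrary: vs and vs rule: comp_comps.induct)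
  case (1 m b0 p)
  then show ?case by (auto simp: bt_def nth_append)
next
  case (2 m b0 f)
  have l: "length (vfrom w vs (comp m b0 f)) = b0 + fsize f"
    using vfrom_prefix[of w vs "comp m b0 f"] 2 by (simp add: length_comp)
  show ?case using 2 l fsize_pos[of f] by (simp add: nth_append)
next
  case (3 m b0 t ws fs)
  let ?v = "vfrom w vs (comps m b0 fs)"
  have l: "length ?v = b0 + sum_list (map fsize fs)"
    using vfrom_prefix[of w vs "comps m b0 fs"] 3 by (simp add: length_comp)
  have e: "map (\<lambda>j. ?v ! j) (outs b0 fs) = map (feval w) fs" using 3 by blast
  show ?case using l e
    by (simp add: nth_append filter_concat_rep length_outs flip: map_map)
next
  case (4 m b0)
  then show ?case by simp
next
  case (5 m b0 f fs)
  let ?v1 = "vfrom w vs (comp m b0 f)"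
  have l: "length ?v1 = b0 + fsize f"
    using vfrom_prefix[of w vs "comp m b0 f"] 5 by (simp add: length_comp)
  have a: "?v1 ! (b0 + fsize f - 1) = feval w f" using 5 by blast
  have b: "map (\<lambda>j. vfrom w ?v1 (comps m (b0 + fsize f) fs) ! j) (outs (b0 + fsize f) fs) = map (feval w) fs"
    using 5 l by blast
  show ?case using a b l fsize_pos[of f] by (simp add: vfrom_nth)
qed

lemma outs_range: "j \<in> set (outs b0 fs) \<Longrightarrow> b0 \<le> j \<and> j < b0 + sum_list (map fsize fs)"
proof (induction fs arbitrary: b0)
  case Nil then show ?case by simp
next
  case (Cons f fs) then show ?case using fsize_pos[of f] by fastforce
qed

definition wfr :: "nat \<Rightarrow> nat \<Rightarrow> gate list \<Rightarrow> bool" where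
  "wfr m b0 gs = (\<forall>q<length gs. gate_wf m (b0 + q) (gs ! q))"

lemma wfr_append: "wfr m b0 (a @ b) = (wfr m b0 a \<and> wfr m (b0 + length a) b)"
proof
  assume h: "wfr m b0 (a @ b)"
  have 1: "wfr m b0 a" unfolding wfr_def
  proof (intro allI impI)
    fix q assume "q < length a" then show "gate_wf m (b0 + q) (a ! q)"
      using h unfolding wfr_def by (metis length_append nth_append trans_less_add1)
  qed
  have 2: "wfr m (b0 + length a) b" unfolding wfr_def
  proof (intro allI impI)
    fix q assume q: "q < length b"
    have "gate_wf m (b0 + (length a + q)) ((a @ b) ! (length a + q))"
      using h q unfolding wfr_def by (metis add_less_cancel_left length_append)
    then show "gate_wf m (b0 + length a + q) (b ! q)" by (simp add: add.assoc)
  qed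
  show "wfr m b0 a \<and> wfr m (b0 + length a) b" using 1 2 by simp
next
  assume h: "wfr m b0 a \<and> wfr m (b0 + length a) b"
  show "wfr m b0 (a @ b)" unfolding wfr_def
  proof (intro allI impI)
    fix q assume q: "q < length (a @ b)"
    show "gate_wf m (b0 + q) ((a @ b) ! q)"
    proof (cases "q < length a")
      case True then show ?thesis using h unfolding wfr_def by (simp add: nth_append)
    next
      case False
      then obtain r where r: "q = length a + r" by (metis le_add_diff_inverse not_less)
      then show ?thesis using h q unfolding wfr_def by (simp add: add.assoc)
    qed
  qed
qed

lemma set_concat_rep: "set (concat (map2 replicate ws js)) \<subseteq> set js"
  by (auto dest: set_zip_rightD)

lemma comp_wf: "wfr m b0 (comp m b0 f)" "wfr m b0 (comps m b0 fs)"
proof (induction m b0 f and m b0 fs rule: comp_comps.induct)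
  case (1 m b0 p)
  then show ?case by (auto simp: wfr_def)
next
  case (2 m b0 f)
  then show ?case using fsize_pos[of f] by (simp add: wfr_append length_comp) (simp add: wfr_def)
next
  case (3 m b0 t ws fs)
  have "\<forall>j\<in>set (concat (map2 replicate ws (outs b0 fs))). j < b0 + sum_list (map fsize fs)"
    using outs_range[of _ b0 fs] set_concat_rep[of ws "outs b0 fs"] by blast
  then have "wfr m (b0 + sum_list (map fsize fs)) [GThr t (concat (map2 replicate ws (outs b0 fs)))]"
    unfolding wfr_def by simp
  then show ?case using 3 by (simp add: wfr_append length_comp)
next
  case (4 m b0)
  then show ?case by (simp add: wfr_def)
next
  case (5 m b0 f fs)
  then show ?case by (simp add: wfr_append length_comp)
qed

definition dfrom :: "nat list \<Rightarrow> gate list \<Rightarrow> nat list" where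
  "dfrom ds gs = foldl (\<lambda>ds g. ds @ [gate_depth ds g]) ds gs"

lemma dfrom_simps[simp]:
  "dfrom ds [] = ds"
  "dfrom ds (gs1 @ gs2) = dfrom (dfrom ds gs1) gs2"
  "dfrom ds [g] = ds @ [gate_depth ds g]"
  by (auto simp: dfrom_def)

lemma dfrom_prefix: "length (dfrom ds gs) = length ds + length gs \<and> take (length ds) (dfrom ds gs) = ds"
  by (induction gs arbitrary: ds rule: rev_induct) (auto simp: dfrom_def)

lemma dfrom_nth: "i < length ds \<Longrightarrow> dfrom ds gs ! i = ds ! i"
  using dfrom_prefix[of ds gs] by (metis nth_take)

lemma foldr_max_le: "(foldr max xs (0::nat) \<le> d) = (\<forall>x\<in>set xs. x \<le> d)"
  by (induction xs) auto

lemma le_foldr_max: "x \<in> set xs \<Longrightarrow> x \<le> foldr max xs (0::nat)"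
  by (induction xs) auto

lemma comp_depth:
  "length ds = b0 \<Longrightarrow> b0 \<le> i \<Longrightarrow> i < b0 + fsize f \<Longrightarrow> dfrom ds (comp m b0 f) ! i \<le> fdepth f"
  "length ds = b0 \<Longrightarrow> b0 \<le> i \<Longrightarrow> i < b0 + sum_list (map fsize fs) \<Longrightarrow>
     dfrom ds (comps m b0 fs) ! i \<le> foldr max (map fdepth fs) 0"
proof (induction m b0 f and m b0 fs arbitrary: ds i and ds i rule: comp_comps.induct)
  case (1 m b0 p)
  then show ?case by (cases "p < m") (auto simp: nth_append)
next
  case (2 m b0 f)
  let ?d = "dfrom ds (comp m b0 f)"
  have l: "length ?d = b0 + fsize f"
    using dfrom_prefix[of ds "comp m b0 f"] 2 by (simp add: length_comp)
  have h: "\<And>i. b0 \<le> i \<Longrightarrow> i < b0 + fsize f \<Longrightarrow> ?d ! i \<le> fdepth f" using 2 by blast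
  show ?case
  proof (cases "i < b0 + fsize f")
    case True
    have "?d ! i \<le> fdepth f" using True \<open>b0 \<le> i\<close> by (intro h)
    then show ?thesis using True l by (simp add: nth_append)
  next
    case False
    then have "i = b0 + fsize f" using 2 by simp
    then show ?thesis using h[of "b0 + fsize f - 1"] l fsize_pos[of f] by (simp add: nth_append)
  qed
next
  case (3 m b0 t ws fs)
  let ?d = "dfrom ds (comps m b0 fs)"
  let ?M = "foldr max (map fdepth fs) 0"
  let ?js = "concat (map2 replicate ws (outs b0 fs))"
  have bi: "b0 \<le> i" "length ds = b0" "i < b0 + fsize (FThr t ws fs)" using 3 by auto
  have l: "length ?d = b0 + sum_list (map fsize fs)"
    using dfrom_prefix[of ds "comps m b0 fs"] bi by (simp add: length_comp)
  have h: "\<And>i. b0 \<le> i \<Longrightarrow> i < b0 + sum_list (map fsize fs) \<Longrightarrow> ?d ! i \<le> ?M"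
    using 3(1) bi(2) by blast
  show ?case
  proof (cases "i < b0 + sum_list (map fsize fs)")
    case True
    have "?d ! i \<le> ?M" using True bi by (intro h)
    then show ?thesis using True l by (simp add: nth_append)
  next
    case False
    then have ieq: "i = b0 + sum_list (map fsize fs)" using bi by simp
    have js: "\<forall>j\<in>set ?js. b0 \<le> j \<and> j < b0 + sum_list (map fsize fs)"
      using outs_range[of _ b0 fs] set_concat_rep[of ws "outs b0 fs"] by blast
    have "\<forall>j\<in>set ?js. ?d ! j \<le> ?M" using js h by blast
    then have "foldr max (map (\<lambda>j. ?d ! j) ?js) 0 \<le> ?M"
      unfolding foldr_max_le by auto
    then show ?thesis using l ieq by (simp add: nth_append)
  qed
next
  case (4 m b0)
  then show ?case by simp
next
  case (5 m b0 f fs)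
  let ?d = "dfrom ds (comp m b0 f)"
  have l: "length ?d = b0 + fsize f"
    using dfrom_prefix[of ds "comp m b0 f"] 5 by (simp add: length_comp)
  have h1: "\<And>i. b0 \<le> i \<Longrightarrow> i < b0 + fsize f \<Longrightarrow> ?d ! i \<le> fdepth f" using 5 by blast
  have h2: "\<And>i. b0 + fsize f \<le> i \<Longrightarrow> i < b0 + fsize f + sum_list (map fsize fs) \<Longrightarrow>
      dfrom ?d (comps m (b0 + fsize f) fs) ! i \<le> foldr max (map fdepth fs) 0" using 5 l by blast
  show ?case
  proof (cases "i < b0 + fsize f")
    case True
    have a: "?d ! i \<le> fdepth f" using True 5 by (intro h1) auto
    have b: "dfrom ?d (comps m (b0 + fsize f) fs) ! i = ?d ! i" using True l by (intro dfrom_nth) simp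
    show ?thesis using a b by (simp add: le_max_iff_disj)
  next
    case False
    then show ?thesis using h2[of i] 5 by simp
  qed
qed

lemma fm_TC0:
  fixes F :: "nat \<Rightarrow> fm"
  assumes ev: "\<And>m w. length w = m \<Longrightarrow> feval w (F m) = (w \<in> L)"
    and sz: "\<And>m. fsize (F m) \<le> m ^ e + e"
    and dp: "\<And>m. fdepth (F m) \<le> d"
  shows "TC0 L"
  unfolding TC0_def
proof (intro exI allI conjI)
  fix m
  let ?C = "comp m 0 (F m)"
  show "circ_wf m ?C"
    using comp_wf(1)[of m 0 "F m"] fsize_pos[of "F m"] length_comp(1)[of m 0 "F m"]
    unfolding circ_wf_def wfr_def by auto
  show "length ?C \<le> m ^ e + e" using sz length_comp(1) by simp
  show "circ_depth ?C \<le> d"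
    unfolding circ_depth_def foldr_max_le
  proof
    fix x assume "x \<in> set (foldl (\<lambda>ds g. ds @ [gate_depth ds g]) [] ?C)"
    then obtain i where i: "i < length (dfrom [] ?C)" "x = dfrom [] ?C ! i"
      unfolding dfrom_def[symmetric] by (metis in_set_conv_nth)
    have "i < fsize (F m)" using i dfrom_prefix[of "[]" ?C] length_comp(1) by simp
    then show "x \<le> d" using comp_depth(1)[of "[]" 0 i "F m" m] i dp[of m] by simp
  qed
  show "length w = m \<longrightarrow> circ_out w ?C = (w \<in> L)" for w
  proof (intro impI)
    assume lw: "length w = m"
    have ll: "length (vfrom w [] ?C) = fsize (F m)"
      using vfrom_prefix[of w "[]" ?C] length_comp(1)[of m 0 "F m"] by simp
    then have "vfrom w [] ?C \<noteq> []" using fsize_pos[of "F m"] by auto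
    then have "last (vfrom w [] ?C) = vfrom w [] ?C ! (fsize (F m) - 1)"
      using ll by (simp add: last_conv_nth)
    then show "circ_out w ?C = (w \<in> L)"
      using comp_correct(1)[of w m "[]" 0 "F m"] lw ev[of w m]
      unfolding circ_out_def circ_vals_def vfrom_def by simp
  qed
qed

definition FAnd :: "fm list \<Rightarrow> fm" where
  "FAnd fs = FThr (length fs) (replicate (length fs) 1) fs"
definition FOr :: "fm list \<Rightarrow> fm" where
  "FOr fs = FThr 1 (replicate (length fs) 1) fs"
definition mkThr :: "nat \<Rightarrow> (nat \<times> fm) list \<Rightarrow> fm" where
  "mkThr t ps = FThr t (map fst ps) (map snd ps)"

lemma sum_rep1: "sum_list (map2 (\<lambda>k b. if b then k else 0) (replicate (length bs) (1::nat)) bs) = length (filter id bs)"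
  by (induction bs) auto

lemma feval_FAnd[simp]: "feval w (FAnd fs) = (\<forall>f\<in>set fs. feval w f)"
proof -
  have "feval w (FAnd fs) = (length fs \<le> length (filter id (map (feval w) fs)))"
    unfolding FAnd_def using sum_rep1[of "map (feval w) fs"] by simp
  also have "\<dots> = (\<forall>f\<in>set fs. feval w f)"
  proof
    assume a: "length fs \<le> length (filter id (map (feval w) fs))"
    show "\<forall>f\<in>set fs. feval w f"
    proof (rule ccontr)
      assume "\<not> (\<forall>f\<in>set fs. feval w f)"
      then obtain x where "x \<in> set (map (feval w) fs)" "\<not> id x" by auto
      then have "length (filter id (map (feval w) fs)) < length (map (feval w) fs)"
        by (rule length_filter_less)
      then show False using a by simp
    qed
  next
    assume "\<forall>f\<in>set fs. feval w f"
    then have "filter id (map (feval w) fs) = map (feval w) fs" by (simp add: filter_id_conv)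
    then show "length fs \<le> length (filter id (map (feval w) fs))" by simp
  qed
  finally show ?thesis .
qed

lemma feval_FOr[simp]: "feval w (FOr fs) = (\<exists>f\<in>set fs. feval w f)"
proof -
  have "feval w (FOr fs) = (1 \<le> length (filter id (map (feval w) fs)))"
    unfolding FOr_def using sum_rep1[of "map (feval w) fs"] by simp
  also have "\<dots> = (\<exists>f\<in>set fs. feval w f)"
    by (auto simp: Suc_le_eq filter_empty_conv length_greater_0_conv[symmetric] simp del: length_greater_0_conv)
  finally show ?thesis .
qed

lemma map2_fst_snd: "map2 g (map fst ps) (map (h \<circ> snd) ps) = map (\<lambda>p. g (fst p) (h (snd p))) ps"
  by (induction ps) auto

lemma feval_mkThr: "feval w (mkThr t ps) = (t \<le> sum_list (map (\<lambda>p. if feval w (snd p) then fst p else 0) ps))"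
  unfolding mkThr_def using map2_fst_snd[of "\<lambda>k b. if b then k else 0" ps "feval w"] by simp

lemma fsize_FAnd: "fsize (FAnd fs) = Suc (sum_list (map fsize fs))" by (simp add: FAnd_def)
lemma fsize_FOr: "fsize (FOr fs) = Suc (sum_list (map fsize fs))" by (simp add: FOr_def)
lemma fsize_mkThr: "fsize (mkThr t ps) = Suc (sum_list (map (fsize \<circ> snd) ps))" by (simp add: mkThr_def)

lemma fdepth_le: "\<forall>f\<in>set fs. fdepth f \<le> d \<Longrightarrow> fdepth (FThr t ws fs) \<le> Suc d"
  by (simp add: foldr_max_le)
lemma fdepth_FAnd: "\<forall>f\<in>set fs. fdepth f \<le> d \<Longrightarrow> fdepth (FAnd fs) \<le> Suc d"
  unfolding FAnd_def by (rule fdepth_le)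
lemma fdepth_FOr: "\<forall>f\<in>set fs. fdepth f \<le> d \<Longrightarrow> fdepth (FOr fs) \<le> Suc d"
  unfolding FOr_def by (rule fdepth_le)
lemma fdepth_mkThr: "\<forall>p\<in>set ps. fdepth (snd p) \<le> d \<Longrightarrow> fdepth (mkThr t ps) \<le> Suc d"
  unfolding mkThr_def by (rule fdepth_le) auto

lemma sum_list_bound: "\<forall>x\<in>set xs. f x \<le> (B::nat) \<Longrightarrow> sum_list (map f xs) \<le> length xs * B"
  by (induction xs) auto

definition lit :: "nat \<Rightarrow> bool \<Rightarrow> fm" where
  "lit p b = (if b then FIn p else FNot (FIn p))"
definition conjP :: "nat list \<Rightarrow> bool list \<Rightarrow> fm" where
  "conjP P bs = FAnd (map2 lit P bs)"
definition dnf :: "nat list \<Rightarrow> (bool list \<Rightarrow> bool) \<Rightarrow> fm" where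
  "dnf P Q = FOr (map (conjP P) (filter (\<lambda>bs. \<exists>w. map (bt w) P = bs \<and> Q w) (List.n_lists (length P) [True, False])))"

lemma conjP_eval: "length bs = length P \<Longrightarrow> feval w (conjP P bs) = (map (bt w) P = bs)"
  unfolding conjP_def
proof (induction P bs rule: list_induct2')
  case (4 p P b bs)
  then show ?case by (auto simp: lit_def)
qed auto

lemma dnf_correct:
  assumes "\<And>w w'. map (bt w) P = map (bt w') P \<Longrightarrow> Q w = Q w'"
  shows "feval w (dnf P Q) = Q w"
proof
  assume "feval w (dnf P Q)"
  then obtain bs where bs: "bs \<in> set (List.n_lists (length P) [True, False])"
    "\<exists>w. map (bt w) P = bs \<and> Q w" "feval w (conjP P bs)"
    unfolding dnf_def by auto
  have "length bs = length P" using bs(1) by (simp add: length_n_lists_elem)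
  then have "map (bt w) P = bs" using bs(3) conjP_eval by simp
  then show "Q w" using bs(2) assms by metis
next
  assume q: "Q w"
  let ?bs = "map (bt w) P"
  have "?bs \<in> set (List.n_lists (length P) [True, False])"
    by (auto simp: set_n_lists)
  moreover have "feval w (conjP P ?bs)" using conjP_eval[of ?bs P w] by simp
  ultimately show "feval w (dnf P Q)" unfolding dnf_def using q by force
qed

definition dsz :: "nat \<Rightarrow> nat" where
  "dsz k = Suc (2 ^ k * Suc (2 * k))"

lemma dsz_mono: "a \<le> b \<Longrightarrow> dsz a \<le> dsz b"
  unfolding dsz_def by (intro Suc_le_mono[THEN iffD2] mult_le_mono) auto

lemma fsize_conjP: "fsize (conjP P bs) \<le> Suc (2 * length P)"
proof -
  have "\<forall>x\<in>set (zip P bs). fsize (case x of (p, b) \<Rightarrow> lit p b) \<le> 2"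
    by (auto simp: lit_def)
  then have "sum_list (map fsize (map2 lit P bs)) \<le> length (zip P bs) * 2"
    using sum_list_bound[of "zip P bs" "\<lambda>x. fsize (case x of (p, b) \<Rightarrow> lit p b)" 2]
    by (simp add: comp_def)
  then show ?thesis unfolding conjP_def fsize_FAnd by simp
qed

lemma fsize_dnf: "fsize (dnf P Q) \<le> dsz (length P)"
proof -
  let ?L = "filter (\<lambda>bs. \<exists>w. map (bt w) P = bs \<and> Q w) (List.n_lists (length P) [True, False])"
  have l: "length ?L \<le> 2 ^ length P"
  proof -
    have "length (List.n_lists (length P) [True, False]) = 2 ^ length P"
      unfolding length_n_lists by (simp add: numeral_2_eq_2)
    then show ?thesis using length_filter_le[of _ "List.n_lists (length P) [True, False]"] by simp
  qed
  have "sum_list (map fsize (map (conjP P) ?L)) \<le> length ?L * Suc (2 * length P)"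
    using sum_list_bound[of ?L "\<lambda>bs. fsize (conjP P bs)" "Suc (2 * length P)"] fsize_conjP[of P]
    by (simp only: map_map comp_def) blast
  also have "\<dots> \<le> 2 ^ length P * Suc (2 * length P)" using l by (rule mult_right_mono) simp
  finally show ?thesis unfolding dnf_def fsize_FOr dsz_def by simp
qed

lemma fdepth_dnf: "fdepth (dnf P Q) \<le> 3"
proof -
  have "\<forall>f\<in>set (map2 lit P bs). fdepth f \<le> 1" for bs
    by (auto simp: lit_def)
  then have "fdepth (conjP P bs) \<le> 2" for bs
    unfolding conjP_def using fdepth_FAnd by (metis Suc_1)
  then show ?thesis unfolding dnf_def
    by (intro fdepth_FOr[where d=2, simplified]) auto
qed

lemma set_TL: "set (tuple_list n a) = tuples n a"
proof (induction a)
  case 0 then show ?case by (auto simp: tuples_def)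
next
  case (Suc a)
  show ?case
  proof
    show "set (tuple_list n (Suc a)) \<subseteq> tuples n (Suc a)" using Suc by (auto simp: tuples_def)
  next
    show "tuples n (Suc a) \<subseteq> set (tuple_list n (Suc a))"
    proof
      fix t assume "t \<in> tuples n (Suc a)"
      then obtain x u where "t = x # u" "x < n" "u \<in> tuples n a"
        by (auto simp: tuples_def length_Suc_conv)
      then show "t \<in> set (tuple_list n (Suc a))" using Suc by auto
    qed
  qed
qed

lemma length_TL: "length (tuple_list n a) = n ^ a"
proof (induction a)
  case 0 then show ?case by simp
next
  case (Suc a)
  have "length (tuple_list n (Suc a)) = sum_list (map (\<lambda>x. n ^ a) [0..<n])"
    using Suc by (simp add: length_concat comp_def)
  also have "\<dots> = n * n ^ a" by (simp add: sum_list_triv)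
  finally show ?case by simp
qed

lemma card_tuples: "card (tuples n a) = n ^ a"
proof -
  have "tuples n a = {xs. set xs \<subseteq> {0..<n} \<and> length xs = a}" by (auto simp: tuples_def)
  then show ?thesis using card_lists_length_eq[of "{0..<n}" a] by simp
qed

lemma distinct_TL: "distinct (tuple_list n a)"
  by (rule card_distinct) (simp add: set_TL card_tuples length_TL)

lemma concat_nth:
  "i < length xss \<Longrightarrow> j < length (xss ! i) \<Longrightarrow> concat xss ! (sum_list (map length (take i xss)) + j) = xss ! i ! j"
proof (induction xss arbitrary: i)
  case Nil then show ?case by simp
next
  case (Cons xs xss)
  show ?case
  proof (cases i)
    case 0 then show ?thesis using Cons by (simp add: nth_append)
  next
    case (Suc i')
    then show ?thesis using Cons by (simp add: nth_append add.assoc)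
  qed
qed

lemma concat_decomp:
  "q < length (concat xss) \<Longrightarrow> \<exists>i j. i < length xss \<and> j < length (xss ! i) \<and> q = sum_list (map length (take i xss)) + j"
proof (induction xss arbitrary: q)
  case Nil then show ?case by simp
next
  case (Cons xs xss)
  show ?case
  proof (cases "q < length xs")
    case True
    then show ?thesis by (intro exI[of _ 0] exI[of _ q]) simp
  next
    case False
    then have "q - length xs < length (concat xss)" using Cons by simp
    then obtain i j where "i < length xss" "j < length (xss ! i)"
      "q - length xs = sum_list (map length (take i xss)) + j" using Cons by blast
    then show ?thesis using False by (intro exI[of _ "Suc i"] exI[of _ j]) simp
  qed
qed

definition off :: "nat list \<Rightarrow> nat \<Rightarrow> nat \<Rightarrow> nat" where
  "off ar n i = sum_list (map (\<lambda>i'. n ^ (ar ! i')) [0..<i])"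

definition idx :: "nat \<Rightarrow> nat \<Rightarrow> nat list \<Rightarrow> nat" where
  "idx n a t = (SOME j. j < n ^ a \<and> tuple_list n a ! j = t)"

definition pos :: "nat list \<Rightarrow> nat \<Rightarrow> nat \<Rightarrow> nat list \<Rightarrow> nat" where
  "pos ar n i t = n + 1 + off ar n i + idx n (ar ! i) t"

definition Ln :: "nat list \<Rightarrow> nat \<Rightarrow> nat" where
  "Ln ar n = off ar n (length ar)"

lemma idx_spec: "t \<in> tuples n a \<Longrightarrow> idx n a t < n ^ a \<and> tuple_list n a ! idx n a t = t"
proof -
  assume "t \<in> tuples n a"
  then obtain j where "j < length (tuple_list n a)" "tuple_list n a ! j = t"
    by (metis in_set_conv_nth set_TL)
  then have "\<exists>j. j < n ^ a \<and> tuple_list n a ! j = t" using length_TL by auto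
  then show ?thesis unfolding idx_def by (rule someI_ex)
qed

lemma idx_nth: "j < n ^ a \<Longrightarrow> idx n a (tuple_list n a ! j) = j"
proof -
  assume j: "j < n ^ a"
  have t: "tuple_list n a ! j \<in> tuples n a" using j set_TL length_TL by (metis nth_mem)
  have "idx n a (tuple_list n a ! j) < n ^ a" "tuple_list n a ! idx n a (tuple_list n a ! j) = tuple_list n a ! j"
    using idx_spec[OF t] by auto
  then show ?thesis using j distinct_TL[of n a] length_TL[of n a] nth_eq_iff_index_eq by metis
qed

lemma blocks_take:
  "i \<le> length ar \<Longrightarrow> sum_list (map length (take i (map (\<lambda>i. map (\<lambda>t. t \<in> R i) (tuple_list n (ar ! i))) [0..<length ar]))) = off ar n i"
  unfolding off_def by (simp add: take_map length_TL comp_def)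

lemma length_rel_bits: "length (rel_bits ar n R) = Ln ar n"
  unfolding rel_bits_def Ln_def off_def by (simp add: length_concat comp_def length_TL)

lemma off_mono: "i < length ar \<Longrightarrow> off ar n i + n ^ (ar ! i) \<le> Ln ar n"
proof -
  assume i: "i < length ar"
  have "off ar n (Suc i) \<le> off ar n (length ar)"
    unfolding off_def
  proof -
    have "[0..<length ar] = [0..<Suc i] @ [Suc i..<length ar]" using i
      by (metis Suc_leI le_add_diff_inverse upt_add_eq_append zero_le)
    then show "sum_list (map (\<lambda>i'. n ^ (ar ! i')) [0..<Suc i]) \<le> sum_list (map (\<lambda>i'. n ^ (ar ! i')) [0..<length ar])"
      by simp
  qed
  then show ?thesis unfolding Ln_def off_def by simp
qed

lemma pos_bit:
  assumes i: "i < length ar" and t: "t \<in> tuples n (ar ! i)"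
  shows "pos ar n i t < n + 1 + Ln ar n"
    and "bt (replicate n True @ [False] @ rel_bits ar n R @ kb) (pos ar n i t) = (t \<in> R i)"
proof -
  let ?xss = "map (\<lambda>i. map (\<lambda>t. t \<in> R i) (tuple_list n (ar ! i))) [0..<length ar]"
  have id: "idx n (ar ! i) t < n ^ (ar ! i)" "tuple_list n (ar ! i) ! idx n (ar ! i) t = t"
    using idx_spec[OF t] by auto
  have q: "off ar n i + idx n (ar ! i) t < Ln ar n" using id off_mono[OF i, of n] by simp
  then show "pos ar n i t < n + 1 + Ln ar n" unfolding pos_def by simp
  have "rel_bits ar n R ! (off ar n i + idx n (ar ! i) t) = (t \<in> R i)"
    using concat_nth[of i ?xss "idx n (ar ! i) t"] blocks_take[of i ar R n] i id
    unfolding rel_bits_def by (simp add: length_TL)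
  then show "bt (replicate n True @ [False] @ rel_bits ar n R @ kb) (pos ar n i t) = (t \<in> R i)"
    using q unfolding pos_def bt_def by (simp add: nth_append length_rel_bits)
qed

definition Rw :: "nat list \<Rightarrow> nat \<Rightarrow> bool list \<Rightarrow> nat \<Rightarrow> nat list set" where
  "Rw ar n w = (\<lambda>i. {t \<in> tuples n (ar ! i). bt w (pos ar n i t)})"

lemma Rw_family: "is_rel_family ar n (Rw ar n w)"
  unfolding is_rel_family_def Rw_def by auto

lemma decode:
  assumes lw: "n + 1 + Ln ar n \<le> length w"
  shows "rel_bits ar n (Rw ar n w) = take (Ln ar n) (drop (n + 1) w)"
proof (rule nth_equalityI)
  show "length (rel_bits ar n (Rw ar n w)) = length (take (Ln ar n) (drop (n + 1) w))"
    using lw by (simp add: length_rel_bits)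
next
  fix q assume "q < length (rel_bits ar n (Rw ar n w))"
  then have qL: "q < Ln ar n" by (simp add: length_rel_bits)
  let ?xss = "map (\<lambda>i. map (\<lambda>t. t \<in> Rw ar n w i) (tuple_list n (ar ! i))) [0..<length ar]"
  have "q < length (concat ?xss)" using qL length_rel_bits[of ar n "Rw ar n w"] unfolding rel_bits_def by simp
  then obtain i j where ij: "i < length ?xss" "j < length (?xss ! i)" "q = sum_list (map length (take i ?xss)) + j"
    using concat_decomp by blast
  have i: "i < length ar" using ij by simp
  have j: "j < n ^ (ar ! i)" using ij i by (simp add: length_TL)
  have qq: "q = off ar n i + j" using ij(3) blocks_take[of i ar "Rw ar n w" n] i by simp
  have tin: "tuple_list n (ar ! i) ! j \<in> tuples n (ar ! i)" using j set_TL length_TL by (metis nth_mem)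
  have "rel_bits ar n (Rw ar n w) ! q = (tuple_list n (ar ! i) ! j \<in> Rw ar n w i)"
    using concat_nth[of i ?xss j] ij unfolding rel_bits_def by (simp add: i)
  also have "\<dots> = bt w (pos ar n i (tuple_list n (ar ! i) ! j))" using tin unfolding Rw_def by simp
  also have "\<dots> = bt w (n + 1 + q)" unfolding pos_def using idx_nth[OF j] qq by (simp add: add.assoc)
  also have "\<dots> = take (Ln ar n) (drop (n + 1) w) ! q" using qL lw unfolding bt_def by simp
  finally show "rel_bits ar n (Rw ar n w) ! q = take (Ln ar n) (drop (n + 1) w) ! q" .
qed

definition lst :: "'a set \<Rightarrow> 'a list" where
  "lst A = (SOME l. set l = A \<and> distinct l)"

lemma lst_spec: "finite A \<Longrightarrow> set (lst A) = A \<and> distinct (lst A)"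
  unfolding lst_def by (rule someI_ex) (rule finite_distinct_list)

lemma length_lst: "finite A \<Longrightarrow> length (lst A) = card A"
  using lst_spec distinct_card by metis

definition tupA :: "nat set \<Rightarrow> nat \<Rightarrow> nat list set" where
  "tupA A a = {t. length t = a \<and> set t \<subseteq> A}"

definition fo :: "(nat \<times> nat list) set \<Rightarrow> nat \<Rightarrow> nat list set" where
  "fo Sp = (\<lambda>i. {t. (i, t) \<in> Sp})"

lemma finite_tupA: "finite A \<Longrightarrow> finite (tupA A a)"
proof -
  assume "finite A"
  moreover have "tupA A a = {xs. set xs \<subseteq> A \<and> length xs = a}" by (auto simp: tupA_def)
  ultimately show ?thesis using finite_lists_length_eq by simp
qed

lemma card_tupA: "finite A \<Longrightarrow> card (tupA A a) = card A ^ a"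
proof -
  assume "finite A"
  moreover have "tupA A a = {xs. set xs \<subseteq> A \<and> length xs = a}" by (auto simp: tupA_def)
  ultimately show ?thesis using card_lists_length_eq by simp
qed

lemma mem_apply_mod: "(t \<in> apply_mod R S i) = (t \<in> R i \<longleftrightarrow> t \<notin> S i)"
  unfolding apply_mod_def by auto

context
  fixes ar :: "nat list" and c :: nat and psi :: qf and md :: mode
  assumes wf: "qf_wf ar c psi"
begin

definition TP :: "nat set \<Rightarrow> (nat \<times> nat list) set" where
  "TP A = (SIGMA i:{..<length ar}. tupA A (ar ! i))"

definition YP :: "nat list \<Rightarrow> nat \<Rightarrow> (nat \<times> nat list) set" where
  "YP xs y = {p \<in> TP (insert y (set xs)). y \<in> set (snd p)}"

definition okp :: "(nat \<Rightarrow> nat list set) \<Rightarrow> (nat \<times> nat list) set \<Rightarrow> bool" where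
  "okp R Sp = (case md of Del \<Rightarrow> (\<forall>p\<in>Sp. snd p \<in> R (fst p))
                        | Add \<Rightarrow> (\<forall>p\<in>Sp. snd p \<notin> R (fst p))
                        | Edit \<Rightarrow> True)"

definition holds :: "(nat \<Rightarrow> nat list set) \<Rightarrow> nat list \<Rightarrow> nat \<Rightarrow> bool" where
  "holds R xs y = qf_sem R (\<lambda>j. (xs @ [y]) ! j) psi"

definition good :: "(nat \<Rightarrow> nat list set) \<Rightarrow> nat list \<Rightarrow> (nat \<times> nat list) set \<Rightarrow> bool" where
  "good R xs Sp = (okp R Sp \<and> (\<forall>y\<in>set xs. holds (apply_mod R (fo Sp)) xs y))"

definition ok_y :: "(nat \<Rightarrow> nat list set) \<Rightarrow> nat list \<Rightarrow> (nat \<times> nat list) set \<Rightarrow> nat \<Rightarrow> (nat \<times> nat list) set \<Rightarrow> bool" where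
  "ok_y R xs Sp y Sy = (Sy \<subseteq> YP xs y \<and> okp R Sy \<and> holds (apply_mod R (fo (Sp \<union> Sy))) xs y)"

definition feas :: "(nat \<Rightarrow> nat list set) \<Rightarrow> nat list \<Rightarrow> (nat \<times> nat list) set \<Rightarrow> nat \<Rightarrow> bool" where
  "feas R xs Sp y = (\<exists>Sy. ok_y R xs Sp y Sy)"

definition mc :: "(nat \<Rightarrow> nat list set) \<Rightarrow> nat list \<Rightarrow> (nat \<times> nat list) set \<Rightarrow> nat \<Rightarrow> nat" where
  "mc R xs Sp y = (LEAST k. \<exists>Sy. ok_y R xs Sp y Sy \<and> card Sy = k)"

definition Ys :: "nat \<Rightarrow> nat list \<Rightarrow> nat set" where
  "Ys n xs = {y. y < n \<and> y \<notin> set xs}"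

definition crit :: "nat \<Rightarrow> (nat \<Rightarrow> nat list set) \<Rightarrow> nat list \<Rightarrow> (nat \<times> nat list) set \<Rightarrow> nat \<Rightarrow> bool" where
  "crit n R xs Sp k = (Sp \<subseteq> TP (set xs) \<and> good R xs Sp \<and> (\<forall>y\<in>Ys n xs. feas R xs Sp y) \<and>
      card Sp + (\<Sum>y\<in>Ys n xs. mc R xs Sp y) \<le> k)"

definition agree :: "nat set \<Rightarrow> (nat \<Rightarrow> nat list set) \<Rightarrow> (nat \<Rightarrow> nat list set) \<Rightarrow> bool" where
  "agree A R R' = (\<forall>i<length ar. \<forall>t. length t = ar ! i \<longrightarrow> set t \<subseteq> A \<longrightarrow> (t \<in> R i \<longleftrightarrow> t \<in> R' i))"

lemma finite_TP: "finite A \<Longrightarrow> finite (TP A)"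
  unfolding TP_def by (auto intro: finite_tupA)

lemma TP_mem: "(p \<in> TP A) = (fst p < length ar \<and> length (snd p) = ar ! fst p \<and> set (snd p) \<subseteq> A)"
  unfolding TP_def tupA_def by (cases p) auto

lemma qf_local:
  "qf_wf ar c f \<Longrightarrow> (\<forall>x\<le>c. v x \<in> A) \<Longrightarrow> agree A R R' \<Longrightarrow> qf_sem R v f = qf_sem R' v f"
proof (induction f)
  case (Atom i xs)
  then have "length (map v xs) = ar ! i" "set (map v xs) \<subseteq> A" "i < length ar" by auto
  then show ?case using Atom unfolding agree_def by simp
qed auto

lemma holds_local:
  assumes "length xs = c" "agree (insert y (set xs)) R R'"
  shows "holds R xs y = holds R' xs y"
  unfolding holds_def
proof (rule qf_local[OF wf _ assms(2)])
  show "\<forall>x\<le>c. (xs @ [y]) ! x \<in> insert y (set xs)"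
  proof (intro allI impI)
    fix x assume "x \<le> c"
    then have "x < length (xs @ [y])" using assms(1) by simp
    then have "(xs @ [y]) ! x \<in> set (xs @ [y])" by (rule nth_mem)
    then show "(xs @ [y]) ! x \<in> insert y (set xs)" by simp
  qed
qed

lemma agree_apply_mod: "agree A R R' \<Longrightarrow> agree A (apply_mod R S) (apply_mod R' S)"
  unfolding agree_def mem_apply_mod by blast

lemma agree_S:
  "(\<forall>p. fst p < length ar \<longrightarrow> length (snd p) = ar ! fst p \<longrightarrow> set (snd p) \<subseteq> A \<longrightarrow> (p \<in> S1 \<longleftrightarrow> p \<in> S2))
   \<Longrightarrow> agree A (apply_mod R (fo S1)) (apply_mod R (fo S2))"
  unfolding agree_def mem_apply_mod fo_def by force

lemma agree_mono: "agree B R R' \<Longrightarrow> A \<subseteq> B \<Longrightarrow> agree A R R'"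
  unfolding agree_def by blast

lemma okp_local: "Sp \<subseteq> TP A \<Longrightarrow> agree A R R' \<Longrightarrow> okp R Sp = okp R' Sp"
  unfolding okp_def agree_def by (cases md) (auto simp: TP_mem subset_iff)

lemma good_local:
  assumes "length xs = c" "Sp \<subseteq> TP (set xs)" "agree (set xs) R R'"
  shows "good R xs Sp = good R' xs Sp"
proof -
  have "holds (apply_mod R (fo Sp)) xs y = holds (apply_mod R' (fo Sp)) xs y" if "y \<in> set xs" for y
    using that assms by (intro holds_local agree_apply_mod) (auto simp: insert_absorb)
  then show ?thesis unfolding good_def using okp_local[OF assms(2,3)] by auto
qed

lemma ok_y_local:
  assumes "length xs = c" "Sp \<subseteq> TP (set xs)" "agree (insert y (set xs)) R R'"
  shows "ok_y R xs Sp y Sy = ok_y R' xs Sp y Sy"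
proof -
  have "YP xs y \<subseteq> TP (insert y (set xs))" unfolding YP_def by auto
  then have "Sy \<subseteq> YP xs y \<Longrightarrow> okp R Sy = okp R' Sy" using okp_local assms(3) by blast
  moreover have "holds (apply_mod R (fo (Sp \<union> Sy))) xs y = holds (apply_mod R' (fo (Sp \<union> Sy))) xs y"
    using assms by (intro holds_local agree_apply_mod)
  ultimately show ?thesis unfolding ok_y_def by blast
qed

lemma feas_local:
  "length xs = c \<Longrightarrow> Sp \<subseteq> TP (set xs) \<Longrightarrow> agree (insert y (set xs)) R R' \<Longrightarrow> feas R xs Sp y = feas R' xs Sp y"
  unfolding feas_def using ok_y_local by blast

lemma mc_local:
  "length xs = c \<Longrightarrow> Sp \<subseteq> TP (set xs) \<Longrightarrow> agree (insert y (set xs)) R R' \<Longrightarrow> mc R xs Sp y = mc R' xs Sp y"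
  unfolding mc_def using ok_y_local by presburger

lemma okp_sub: "mode_ok md ar R S \<Longrightarrow> Sp \<subseteq> (SIGMA i:{..<length ar}. S i) \<Longrightarrow> okp R Sp"
  unfolding okp_def mode_ok_def by (cases md) (fastforce+)

lemma okp_mode: "okp R Sp \<Longrightarrow> mode_ok md ar R (fo Sp)"
  unfolding okp_def mode_ok_def fo_def by (cases md) force+

lemma okp_Un: "okp R A \<Longrightarrow> okp R B \<Longrightarrow> okp R (A \<union> B)"
  unfolding okp_def by (cases md) auto

lemma okp_UN: "\<forall>y\<in>I. okp R (F y) \<Longrightarrow> okp R (\<Union>y\<in>I. F y)"
  unfolding okp_def by (cases md) auto

lemma norm_fo:
  assumes "finite Sp" "Sp \<subseteq> (SIGMA i:{..<length ar}. UNIV)"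
  shows "mod_norm ar (fo Sp) = card Sp"
proof -
  have e: "Sp = (SIGMA i:{..<length ar}. fo Sp i)" using assms(2) unfolding fo_def by auto
  have f: "\<forall>i\<in>{..<length ar}. finite (fo Sp i)"
  proof
    fix i
    have "fo Sp i = snd ` (Sp \<inter> {p. fst p = i})" unfolding fo_def by force
    then show "finite (fo Sp i)" using assms(1) by simp
  qed
  have "card Sp = (\<Sum>i<length ar. card (fo Sp i))" by (subst e) (simp add: f)
  then show ?thesis unfolding mod_norm_def by simp
qed

lemma YP_disj: "y \<notin> set xs \<Longrightarrow> y' \<notin> set xs \<Longrightarrow> y \<noteq> y' \<Longrightarrow> YP xs y \<inter> YP xs y' = {}"
  unfolding YP_def TP_mem by auto

lemma YP_TP_disj: "y \<notin> set xs \<Longrightarrow> TP (set xs) \<inter> YP xs y = {}"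
  by (auto simp: YP_def TP_mem)

lemma finite_YP: "finite (YP xs y)"
  unfolding YP_def using finite_TP[of "insert y (set xs)"] by simp

lemma main_equiv:
  assumes fam: "is_rel_family ar n R"
  shows "RM md ar c psi n R k = (\<exists>xs. length xs = c \<and> set xs \<subseteq> {0..<n} \<and> (\<exists>Sp. crit n R xs Sp k))"
proof
  assume "RM md ar c psi n R k"
  then obtain S xs where S: "is_rel_family ar n S" "mode_ok md ar R S" "mod_norm ar S \<le> k"
    and xs: "length xs = c" "set xs \<subseteq> {0..<n}" "\<forall>y<n. holds (apply_mod R S) xs y"
    unfolding RM_def sat_EA_def holds_def by blast
  let ?X = "set xs"
  define SP where "SP = (SIGMA i:{..<length ar}. S i)"
  define Sp where "Sp = SP \<inter> TP ?X"
  define Sy where "Sy = (\<lambda>y. SP \<inter> YP xs y)"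
  have finS: "\<forall>i\<in>{..<length ar}. finite (S i)"
  proof
    fix i assume "i \<in> {..<length ar}"
    then have "S i \<subseteq> tuples n (ar ! i)" using S(1) unfolding is_rel_family_def by auto
    moreover have "finite (tuples n (ar ! i))" using finite_tupA[of "{0..<n}" "ar ! i"]
      unfolding tupA_def tuples_def by simp
    ultimately show "finite (S i)" by (rule finite_subset)
  qed
  have finSP: "finite SP" unfolding SP_def using finS by auto
  have cardSP: "card SP = mod_norm ar S" unfolding SP_def mod_norm_def using finS by simp
  have memSP: "\<And>i t. i < length ar \<Longrightarrow> ((i, t) \<in> SP) = (t \<in> S i)" unfolding SP_def by auto
  have agS: "agree (insert y ?X) (apply_mod R S) (apply_mod R (fo (Sp \<union> Sy y)))" for y
    unfolding agree_def mem_apply_mod fo_def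
  proof (intro allI impI)
    fix i t assume i: "i < length ar" and t: "length t = ar ! i" "set t \<subseteq> insert y ?X"
    have "(t \<in> S i) = ((i, t) \<in> Sp \<union> Sy y)"
    proof (cases "y \<in> set t")
      case True
      then have "(i, t) \<in> YP xs y" unfolding YP_def TP_mem using i t by auto
      then show ?thesis using memSP[OF i] unfolding Sp_def Sy_def by auto
    next
      case False
      then have "(i, t) \<in> TP ?X" unfolding TP_mem using i t by auto
      then show ?thesis using memSP[OF i] unfolding Sp_def Sy_def by auto
    qed
    then show "(t \<in> R i) = (t \<notin> S i) \<longleftrightarrow> (t \<in> R i) = (t \<notin> {t. (i, t) \<in> Sp \<union> Sy y})" by simp
  qed
  have SpTP: "Sp \<subseteq> TP ?X" unfolding Sp_def by auto
  have okSp: "okp R Sp" using okp_sub[OF S(2)] unfolding Sp_def SP_def by auto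
  have good: "good R xs Sp"
    unfolding good_def
  proof (intro conjI okSp ballI)
    fix y assume y: "y \<in> ?X"
    have "holds (apply_mod R S) xs y" using xs y by auto
    moreover have "agree (insert y ?X) (apply_mod R S) (apply_mod R (fo Sp))"
    proof -
      have "agree (insert y ?X) (apply_mod R (fo (Sp \<union> Sy y))) (apply_mod R (fo Sp))"
      proof (rule agree_S, intro allI impI)
        fix p assume "fst p < length ar" "length (snd p) = ar ! fst p" "set (snd p) \<subseteq> insert y ?X"
        have "Sy y \<subseteq> Sp" unfolding Sy_def Sp_def YP_def using y insert_absorb[OF y] by auto
        then show "(p \<in> Sp \<union> Sy y) = (p \<in> Sp)" by auto
      qed
      then show ?thesis using agS[of y] unfolding agree_def by blast
    qed
    ultimately show "holds (apply_mod R (fo Sp)) xs y" using holds_local xs(1) by blast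
  qed
  have oky: "ok_y R xs Sp y (Sy y)" if y: "y \<in> Ys n xs" for y
    unfolding ok_y_def
  proof (intro conjI)
    show "Sy y \<subseteq> YP xs y" unfolding Sy_def by auto
    show "okp R (Sy y)" using okp_sub[OF S(2)] unfolding Sy_def SP_def by auto
    have "holds (apply_mod R S) xs y" using xs y unfolding Ys_def by auto
    then show "holds (apply_mod R (fo (Sp \<union> Sy y))) xs y" using holds_local[OF xs(1) agS[of y]] by simp
  qed
  have feas: "\<forall>y\<in>Ys n xs. feas R xs Sp y" unfolding feas_def using oky by blast
  have mcle: "mc R xs Sp y \<le> card (Sy y)" if "y \<in> Ys n xs" for y
    unfolding mc_def using oky[OF that] by (intro Least_le) blast
  have finYs: "finite (Ys n xs)" unfolding Ys_def by simp
  have finSy: "\<forall>y\<in>Ys n xs. finite (Sy y)" unfolding Sy_def using finSP by auto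
  have disj: "\<forall>y\<in>Ys n xs. \<forall>y'\<in>Ys n xs. y \<noteq> y' \<longrightarrow> Sy y \<inter> Sy y' = {}"
    unfolding Sy_def Ys_def using YP_disj by blast
  have cU: "card (\<Union>y\<in>Ys n xs. Sy y) = (\<Sum>y\<in>Ys n xs. card (Sy y))"
    using card_UN_disjoint[OF finYs finSy disj] .
  have d2: "Sp \<inter> (\<Union>y\<in>Ys n xs. Sy y) = {}"
    unfolding Sp_def Sy_def Ys_def using YP_TP_disj by blast
  have "card Sp + (\<Sum>y\<in>Ys n xs. mc R xs Sp y) \<le> card Sp + (\<Sum>y\<in>Ys n xs. card (Sy y))"
    using mcle by (simp add: sum_mono)
  also have "\<dots> = card (Sp \<union> (\<Union>y\<in>Ys n xs. Sy y))"
    using card_Un_disjoint[of Sp "\<Union>y\<in>Ys n xs. Sy y"] d2 cU finSP finYs finSy unfolding Sp_def by auto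
  also have "\<dots> \<le> card SP" using finSP unfolding Sp_def Sy_def by (intro card_mono) auto
  finally have "card Sp + (\<Sum>y\<in>Ys n xs. mc R xs Sp y) \<le> k" using cardSP S(3) by simp
  then have "crit n R xs Sp k" unfolding crit_def using SpTP good feas by blast
  then show "\<exists>xs. length xs = c \<and> set xs \<subseteq> {0..<n} \<and> (\<exists>Sp. crit n R xs Sp k)" using xs by blast
next
  assume "\<exists>xs. length xs = c \<and> set xs \<subseteq> {0..<n} \<and> (\<exists>Sp. crit n R xs Sp k)"
  then obtain xs Sp where xs: "length xs = c" "set xs \<subseteq> {0..<n}" and cr: "crit n R xs Sp k" by blast
  let ?X = "set xs"
  have SpTP: "Sp \<subseteq> TP ?X" and good: "good R xs Sp" and feas: "\<forall>y\<in>Ys n xs. feas R xs Sp y"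
    and le: "card Sp + (\<Sum>y\<in>Ys n xs. mc R xs Sp y) \<le> k" using cr unfolding crit_def by auto
  define Sy where "Sy = (\<lambda>y. SOME Sy. ok_y R xs Sp y Sy \<and> card Sy = mc R xs Sp y)"
  have Sy: "ok_y R xs Sp y (Sy y) \<and> card (Sy y) = mc R xs Sp y" if "y \<in> Ys n xs" for y
  proof -
    have "\<exists>k Sy. ok_y R xs Sp y Sy \<and> card Sy = k" using feas that unfolding feas_def by blast
    then have "\<exists>Sy. ok_y R xs Sp y Sy \<and> card Sy = mc R xs Sp y"
      unfolding mc_def by (rule LeastI_ex)
    then show ?thesis unfolding Sy_def by (rule someI_ex)
  qed
  define Sall where "Sall = Sp \<union> (\<Union>y\<in>Ys n xs. Sy y)"
  have finYs: "finite (Ys n xs)" unfolding Ys_def by simp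
  have SyYP: "\<forall>y\<in>Ys n xs. Sy y \<subseteq> YP xs y" using Sy unfolding ok_y_def by blast
  have finSy: "\<forall>y\<in>Ys n xs. finite (Sy y)" using SyYP finite_YP finite_subset by blast
  have finSp: "finite Sp" using SpTP finite_TP[of ?X] finite_subset by blast
  have finSall: "finite Sall" unfolding Sall_def using finYs finSy finSp by blast
  have Sall_sub: "Sall \<subseteq> (SIGMA i:{..<length ar}. UNIV)"
  proof
    fix p assume "p \<in> Sall"
    then have "p \<in> TP ?X \<or> (\<exists>y. p \<in> YP xs y)" unfolding Sall_def using SpTP SyYP by blast
    then have "fst p < length ar" unfolding YP_def TP_mem by auto
    then show "p \<in> (SIGMA i:{..<length ar}. UNIV)" by (cases p) auto
  qed
  have disj: "\<forall>y\<in>Ys n xs. \<forall>y'\<in>Ys n xs. y \<noteq> y' \<longrightarrow> Sy y \<inter> Sy y' = {}"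
    using SyYP YP_disj unfolding Ys_def by blast
  have d2: "Sp \<inter> (\<Union>y\<in>Ys n xs. Sy y) = {}"
    using SpTP SyYP YP_TP_disj unfolding Ys_def by blast
  have cardSall: "card Sall = card Sp + (\<Sum>y\<in>Ys n xs. mc R xs Sp y)"
  proof -
    have "card Sall = card Sp + card (\<Union>y\<in>Ys n xs. Sy y)"
      unfolding Sall_def using d2 finSp finYs finSy by (intro card_Un_disjoint) auto
    also have "card (\<Union>y\<in>Ys n xs. Sy y) = (\<Sum>y\<in>Ys n xs. card (Sy y))"
      using card_UN_disjoint[OF finYs finSy disj] .
    also have "\<dots> = (\<Sum>y\<in>Ys n xs. mc R xs Sp y)" using Sy by (intro sum.cong) auto
    finally show ?thesis .
  qed
  have fam: "is_rel_family ar n (fo Sall)"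
    unfolding is_rel_family_def
  proof (intro allI impI subsetI)
    fix i t assume i: "i < length ar" and t: "t \<in> fo Sall i"
    then have "(i, t) \<in> Sall" unfolding fo_def by simp
    then have "(i, t) \<in> TP ?X \<or> (\<exists>y\<in>Ys n xs. (i, t) \<in> YP xs y)"
      unfolding Sall_def using SpTP SyYP by blast
    then have "length t = ar ! i \<and> set t \<subseteq> {0..<n}"
    proof
      assume "(i, t) \<in> TP ?X" then show ?thesis using xs(2) unfolding TP_mem by auto
    next
      assume "\<exists>y\<in>Ys n xs. (i, t) \<in> YP xs y"
      then obtain y where "y < n" "(i, t) \<in> TP (insert y ?X)" unfolding Ys_def YP_def by auto
      then show ?thesis using xs(2) unfolding TP_mem by auto
    qed
    then show "t \<in> tuples n (ar ! i)" unfolding tuples_def by simp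
  qed
  have okall: "okp R Sall"
    unfolding Sall_def using good Sy unfolding good_def ok_y_def
    by (intro okp_Un okp_UN) auto
  have sat: "holds (apply_mod R (fo Sall)) xs y" if y: "y < n" for y
  proof (cases "y \<in> ?X")
    case True
    have "agree (insert y ?X) (apply_mod R (fo Sp)) (apply_mod R (fo Sall))"
    proof (rule agree_S, intro allI impI)
      fix p assume "fst p < length ar" "length (snd p) = ar ! fst p" "set (snd p) \<subseteq> insert y ?X"
      then have "set (snd p) \<subseteq> ?X" using True by auto
      then have "p \<notin> Sy y'" if "y' \<in> Ys n xs" for y'
        using SyYP that unfolding YP_def Ys_def by auto
      then show "(p \<in> Sp) = (p \<in> Sall)" unfolding Sall_def by auto
    qed
    moreover have "holds (apply_mod R (fo Sp)) xs y" using good True unfolding good_def by auto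
    ultimately show ?thesis using holds_local xs(1) by blast
  next
    case False
    then have yY: "y \<in> Ys n xs" using y unfolding Ys_def by simp
    have "agree (insert y ?X) (apply_mod R (fo (Sp \<union> Sy y))) (apply_mod R (fo Sall))"
    proof (rule agree_S, intro allI impI)
      fix p assume "fst p < length ar" "length (snd p) = ar ! fst p" "set (snd p) \<subseteq> insert y ?X"
      then have "p \<notin> Sy y'" if "y' \<in> Ys n xs" "y' \<noteq> y" for y'
        using SyYP that unfolding YP_def Ys_def by auto
      then show "(p \<in> Sp \<union> Sy y) = (p \<in> Sall)" unfolding Sall_def using yY by auto
    qed
    moreover have "holds (apply_mod R (fo (Sp \<union> Sy y))) xs y" using Sy[OF yY] unfolding ok_y_def by auto
    ultimately show ?thesis using holds_local xs(1) by blast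
  qed
  show "RM md ar c psi n R k"
    unfolding RM_def sat_EA_def
  proof (intro exI conjI)
    show "is_rel_family ar n (fo Sall)" by (rule fam)
    show "mode_ok md ar R (fo Sall)" using okall by (rule okp_mode)
    show "mod_norm ar (fo Sall) \<le> k" using norm_fo[OF finSall Sall_sub] cardSall le by simp
    show "length xs = c" "set xs \<subseteq> {0..<n}" by (fact xs)+
    show "\<forall>y<n. qf_sem (apply_mod R (fo Sall)) (\<lambda>j. (xs @ [y]) ! j) psi" using sat unfolding holds_def by blast
  qed
qed

definition Bt :: nat where
  "Bt = (\<Sum>i<length ar. (c + 1) ^ (ar ! i))"

lemma card_TP: "finite A \<Longrightarrow> card (TP A) = (\<Sum>i<length ar. card A ^ (ar ! i))"
  unfolding TP_def by (simp add: finite_tupA card_tupA)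

lemma card_TP_le: "finite A \<Longrightarrow> card A \<le> c + 1 \<Longrightarrow> card (TP A) \<le> Bt"
  unfolding Bt_def card_TP by (intro sum_mono power_mono) auto

lemma card_insert_xs: "length xs = c \<Longrightarrow> card (insert y (set xs)) \<le> c + 1"
proof -
  assume "length xs = c"
  then have "card (set xs) \<le> c" using card_length[of xs] by simp
  then show ?thesis by (simp add: card_insert_if)
qed

lemma mc_le_Bt:
  assumes "length xs = c" "feas R xs Sp y"
  shows "mc R xs Sp y \<le> Bt"
proof -
  obtain Sy where Sy: "ok_y R xs Sp y Sy" using assms(2) unfolding feas_def by blast
  have "mc R xs Sp y \<le> card Sy" unfolding mc_def using Sy by (intro Least_le) blast
  also have "\<dots> \<le> card (TP (insert y (set xs)))"
    using Sy finite_TP[of "insert y (set xs)"] unfolding ok_y_def YP_def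
    by (intro card_mono) auto
  also have "\<dots> \<le> Bt" using card_TP_le card_insert_xs[OF assms(1)] by simp
  finally show ?thesis .
qed

lemma crit_local:
  assumes ag: "agree {0..<n} R R'" and xs: "length xs = c" "set xs \<subseteq> {0..<n}"
  shows "crit n R xs Sp k = crit n R' xs Sp k"
proof (cases "Sp \<subseteq> TP (set xs)")
  case True
  have g: "good R xs Sp = good R' xs Sp" using good_local[OF xs(1) True] agree_mono[OF ag] xs(2) by blast
  have f: "feas R xs Sp y = feas R' xs Sp y" "mc R xs Sp y = mc R' xs Sp y" if "y \<in> Ys n xs" for y
  proof -
    have "insert y (set xs) \<subseteq> {0..<n}" using that xs(2) unfolding Ys_def by auto
    then have a: "agree (insert y (set xs)) R R'" using agree_mono[OF ag] by blast
    show "feas R xs Sp y = feas R' xs Sp y" using feas_local[OF xs(1) True a] .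
    show "mc R xs Sp y = mc R' xs Sp y" using mc_local[OF xs(1) True a] .
  qed
  have "(\<Sum>y\<in>Ys n xs. mc R xs Sp y) = (\<Sum>y\<in>Ys n xs. mc R' xs Sp y)" using f by (intro sum.cong) auto
  then show ?thesis unfolding crit_def using g f by auto
next
  case False then show ?thesis unfolding crit_def by auto
qed

definition PA :: "nat \<Rightarrow> nat set \<Rightarrow> nat list" where
  "PA n A = map (\<lambda>p. pos ar n (fst p) (snd p)) (lst (TP A))"

lemma dep:
  assumes "A \<subseteq> {0..<n}" "map (bt w) (PA n A) = map (bt w') (PA n A)"
  shows "agree A (Rw ar n w) (Rw ar n w')"
  unfolding agree_def
proof (intro allI impI)
  fix i t assume i: "i < length ar" and t: "length t = ar ! i" "set t \<subseteq> A"
  have fA: "finite A" using assms(1) finite_subset by blast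
  have "(i, t) \<in> TP A" unfolding TP_mem using i t by simp
  then have "pos ar n i t \<in> set (PA n A)" unfolding PA_def using lst_spec[OF finite_TP[OF fA]] by force
  then have "bt w (pos ar n i t) = bt w' (pos ar n i t)"
    using assms(2) map_eq_conv[of "bt w" "PA n A" "bt w'"] by blast
  then show "(t \<in> Rw ar n w i) = (t \<in> Rw ar n w' i)" unfolding Rw_def by simp
qed

lemma length_PA: "finite A \<Longrightarrow> card A \<le> c + 1 \<Longrightarrow> length (PA n A) \<le> Bt"
  unfolding PA_def using length_lst[OF finite_TP] card_TP_le by simp

definition Gf where "Gf n xs Sp = dnf (PA n (set xs)) (\<lambda>w. good (Rw ar n w) xs Sp)"
definition Ff where "Ff n xs Sp y = dnf (PA n (insert y (set xs))) (\<lambda>w. feas (Rw ar n w) xs Sp y)"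
definition Mf where "Mf n xs Sp y j = dnf (PA n (insert y (set xs))) (\<lambda>w. Suc j \<le> mc (Rw ar n w) xs Sp y)"
definition ysl where "ysl n xs = filter (\<lambda>y. y \<notin> set xs) [0..<n]"
definition base where "base n = n + 1 + Ln ar n"
definition Tf where "Tf M n xs Sp = mkThr (card Sp + Bt * length (ysl n xs))
   (map (\<lambda>i. (2 ^ i, FIn (base n + i))) [0..<M - base n] @
    concat (map (\<lambda>y. map (\<lambda>j. (1, FNot (Mf n xs Sp y j))) [0..<Bt]) (ysl n xs)))"
definition Ef where "Ef M n xs Sp = FAnd ([Gf n xs Sp] @ map (Ff n xs Sp) (ysl n xs) @ [Tf M n xs Sp])"
definition Df where "Df M n = FOr (concat (map (\<lambda>xs. map (Ef M n xs) (lst (Pow (TP (set xs))))) (List.n_lists c [0..<n])))"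
definition pre where "pre n = FAnd (map FIn [0..<n] @ [FNot (FIn n)])"
definition Fm where "Fm M = FOr (map (\<lambda>n. FAnd [pre n, Df M n]) (filter (\<lambda>n. 0 < n \<and> base n \<le> M) [0..<M]))"

lemma set_ysl: "set (ysl n xs) = Ys n xs" unfolding ysl_def Ys_def by auto
lemma distinct_ysl: "distinct (ysl n xs)" unfolding ysl_def by simp

lemma Gf_eval:
  assumes "length xs = c" "set xs \<subseteq> {0..<n}" "Sp \<subseteq> TP (set xs)"
  shows "feval w (Gf n xs Sp) = good (Rw ar n w) xs Sp"
  unfolding Gf_def
  by (rule dnf_correct, rule good_local[OF assms(1,3)], rule dep[OF assms(2)], assumption)

lemma Ff_eval:
  assumes "length xs = c" "set xs \<subseteq> {0..<n}" "Sp \<subseteq> TP (set xs)" "y < n"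
  shows "feval w (Ff n xs Sp y) = feas (Rw ar n w) xs Sp y"
proof -
  have ins: "insert y (set xs) \<subseteq> {0..<n}" using assms by auto
  show ?thesis unfolding Ff_def
    by (rule dnf_correct, rule feas_local[OF assms(1,3)], rule dep[OF ins], assumption)
qed

lemma Mf_eval:
  assumes "length xs = c" "set xs \<subseteq> {0..<n}" "Sp \<subseteq> TP (set xs)" "y < n"
  shows "feval w (Mf n xs Sp y j) = (Suc j \<le> mc (Rw ar n w) xs Sp y)"
proof -
  have ins: "insert y (set xs) \<subseteq> {0..<n}" using assms by auto
  show ?thesis unfolding Mf_def
  proof (rule dnf_correct)
    fix w w' :: "bool list"
    assume "map (bt w) (PA n (insert y (set xs))) = map (bt w') (PA n (insert y (set xs)))"
    then have "mc (Rw ar n w) xs Sp y = mc (Rw ar n w') xs Sp y"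
      by (rule mc_local[OF assms(1,3) dep[OF ins]])
    then show "(Suc j \<le> mc (Rw ar n w) xs Sp y) = (Suc j \<le> mc (Rw ar n w') xs Sp y)" by simp
  qed
qed

lemma sum_list_concat': "sum_list (concat xss) = sum_list (map sum_list (xss::nat list list))"
  by (induction xss) auto

lemma count_j: "sum_list (map (\<lambda>j. if a \<le> j then 1 else 0) [0..<B]) = B - (a::nat)"
  by (induction B) auto

lemma sum_map_concat: "sum_list (map f (concat xss)) = (sum_list (map (\<lambda>xs. sum_list (map f xs)) xss) :: nat)"
  by (induction xss) auto

lemma sum_bits:
  assumes "length w = M" "b \<le> M"
  shows "sum_list (map (\<lambda>i. if bt w (b + i) then 2 ^ i else 0) [0..<M - b]) = bits_val (drop b w)"
proof -
  have "sum_list (map (\<lambda>i. if bt w (b + i) then 2 ^ i else 0) [0..<M - b])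
      = (\<Sum>i\<in>{0..<M - b}. if bt w (b + i) then 2 ^ i else 0)"
    by (simp add: sum_set_upt_conv_sum_list_nat[symmetric] del: sum_set_upt_conv_sum_list_nat)
  also have "\<dots> = (\<Sum>i<length (drop b w). if drop b w ! i then 2 ^ i else 0)"
    using assms by (intro sum.cong) (auto simp: bt_def)
  finally show ?thesis unfolding bits_val_def .
qed

lemma sum_minus: "\<forall>y\<in>set l. f y \<le> (B::nat) \<Longrightarrow>
  sum_list (map (\<lambda>y. B - f y) l) + sum_list (map f l) = length l * B"
  by (induction l) auto

lemma Ef_eval:
  assumes xs: "length xs = c" "set xs \<subseteq> {0..<n}" and Sp: "Sp \<subseteq> TP (set xs)"
    and lw: "length w = M" "base n \<le> M"
  shows "feval w (Ef M n xs Sp) = crit n (Rw ar n w) xs Sp (bits_val (drop (base n) w))"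
proof -
  let ?R = "Rw ar n w" and ?k = "bits_val (drop (base n) w)" and ?l = "ysl n xs"
  have yn: "\<And>y. y \<in> set ?l \<Longrightarrow> y < n" unfolding ysl_def by auto
  have F: "(\<forall>f\<in>set (map (Ff n xs Sp) ?l). feval w f) = (\<forall>y\<in>Ys n xs. feas ?R xs Sp y)"
    using Ff_eval[OF xs Sp] yn set_ysl by auto
  have T: "feval w (Tf M n xs Sp) = (card Sp + Bt * length ?l \<le> ?k + sum_list (map (\<lambda>y. Bt - mc ?R xs Sp y) ?l))"
  proof -
    let ?g = "\<lambda>p. if feval w (snd p) then fst p else (0::nat)"
    have per: "sum_list (map ?g (map (\<lambda>j. (1::nat, FNot (Mf n xs Sp y j))) [0..<Bt])) = Bt - mc ?R xs Sp y"
      if "y \<in> set ?l" for y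
    proof -
      have "\<And>j. feval w (Mf n xs Sp y j) = (Suc j \<le> mc ?R xs Sp y)" using Mf_eval[OF xs Sp] yn that by blast
      then have eq: "map ?g (map (\<lambda>j. (1::nat, FNot (Mf n xs Sp y j))) [0..<Bt])
          = map (\<lambda>j. if mc ?R xs Sp y \<le> j then 1 else 0) [0..<Bt]"
        by (auto simp: not_less_eq_eq)
      show ?thesis unfolding eq by (rule count_j)
    qed
    have "sum_list (map ?g (concat (map (\<lambda>y. map (\<lambda>j. (1, FNot (Mf n xs Sp y j))) [0..<Bt]) ?l)))
        = sum_list (map (\<lambda>y. sum_list (map ?g (map (\<lambda>j. (1::nat, FNot (Mf n xs Sp y j))) [0..<Bt]))) ?l)"
      by (simp only: sum_map_concat map_map comp_def)
    also have "\<dots> = sum_list (map (\<lambda>y. Bt - mc ?R xs Sp y) ?l)"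
      using per by (intro arg_cong[where f = sum_list] map_cong) auto
    finally have "sum_list (map ?g (concat (map (\<lambda>y. map (\<lambda>j. (1, FNot (Mf n xs Sp y j))) [0..<Bt]) ?l)))
        = sum_list (map (\<lambda>y. Bt - mc ?R xs Sp y) ?l)" .
    moreover have "sum_list (map (\<lambda>p. if feval w (snd p) then fst p else 0) (map (\<lambda>i. (2 ^ i, FIn (base n + i))) [0..<M - base n])) = ?k"
    proof -
      have eq: "map (\<lambda>p. if feval w (snd p) then fst p else 0) (map (\<lambda>i. (2 ^ i, FIn (base n + i))) [0..<M - base n])
        = map (\<lambda>i. if bt w (base n + i) then 2 ^ i else 0) [0..<M - base n]" by auto
      show ?thesis unfolding eq by (rule sum_bits[OF lw])
    qed
    ultimately show ?thesis unfolding Tf_def feval_mkThr by simp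
  qed
  have "feval w (Ef M n xs Sp) = (good ?R xs Sp \<and> (\<forall>y\<in>Ys n xs. feas ?R xs Sp y) \<and> feval w (Tf M n xs Sp))"
    unfolding Ef_def using Gf_eval[OF xs Sp] F by auto
  also have "\<dots> = crit n ?R xs Sp ?k"
  proof (cases "good ?R xs Sp \<and> (\<forall>y\<in>Ys n xs. feas ?R xs Sp y)")
    case True
    then have le: "\<forall>y\<in>set ?l. mc ?R xs Sp y \<le> Bt" using mc_le_Bt[OF xs(1)] set_ysl by blast
    have eq: "sum_list (map (\<lambda>y. Bt - mc ?R xs Sp y) ?l) + (\<Sum>y\<in>Ys n xs. mc ?R xs Sp y) = length ?l * Bt"
      using sum_minus[OF le] sum_list_distinct_conv_sum_set[OF distinct_ysl, of "mc ?R xs Sp" n xs] set_ysl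
      by simp
    have "feval w (Tf M n xs Sp) = (card Sp + (\<Sum>y\<in>Ys n xs. mc ?R xs Sp y) \<le> ?k)"
      unfolding T using eq by (simp add: mult.commute) linarith
    then show ?thesis using True Sp unfolding crit_def by auto
  next
    case False then show ?thesis unfolding crit_def by auto
  qed
  finally show ?thesis .
qed

lemma Fm_correct:
  assumes lw: "length w = M"
  shows "feval w (Fm M) = (w \<in> RM_lang md ar c psi)"
proof
  assume "feval w (Fm M)"
  then obtain n where n: "0 < n" "base n \<le> M" "n < M" "feval w (pre n)" "feval w (Df M n)"
    unfolding Fm_def by auto
  have p1: "\<forall>j<n. bt w j" "\<not> bt w n" using n(4) unfolding pre_def by auto
  obtain xs Sp where xs: "xs \<in> set (List.n_lists c [0..<n])" and Sp: "Sp \<in> set (lst (Pow (TP (set xs))))"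
    and e: "feval w (Ef M n xs Sp)" using n(5) unfolding Df_def by auto
  have xs': "length xs = c" "set xs \<subseteq> {0..<n}" using xs by (auto simp: set_n_lists)
  have Sp': "Sp \<subseteq> TP (set xs)" using Sp lst_spec[of "Pow (TP (set xs))"] finite_TP[of "set xs"] by auto
  have cr: "crit n (Rw ar n w) xs Sp (bits_val (drop (base n) w))" using Ef_eval[OF xs' Sp' lw n(2)] e by simp
  have rm: "RM md ar c psi n (Rw ar n w) (bits_val (drop (base n) w))"
    using main_equiv[OF Rw_family] cr xs' by blast
  have dec: "rel_bits ar n (Rw ar n w) = take (Ln ar n) (drop (n + 1) w)"
    using decode[of n ar w] n(2) lw unfolding base_def by simp
  have tn: "take n w = replicate n True"
    using p1(1) n(3) lw by (intro nth_equalityI) (auto simp: bt_def)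
  have wn: "w ! n = False" using p1(2) n(3) lw by (simp add: bt_def)
  have "w = take (n + 1) w @ drop (n + 1) w" by simp
  also have "take (n + 1) w = take n w @ [w ! n]" using n(3) lw by (simp add: take_Suc_conv_app_nth)
  also have "drop (n + 1) w = take (Ln ar n) (drop (n + 1) w) @ drop (Ln ar n) (drop (n + 1) w)"
    by (rule append_take_drop_id[symmetric])
  also have "drop (Ln ar n) (drop (n + 1) w) = drop (base n) w" unfolding base_def by (simp add: add.commute)
  finally have "w = replicate n True @ [False] @ rel_bits ar n (Rw ar n w) @ drop (base n) w"
    using tn wn dec by simp
  then show "w \<in> RM_lang md ar c psi"
    unfolding RM_lang_def using n(1) Rw_family rm by blast
next
  assume "w \<in> RM_lang md ar c psi"
  then obtain n R kb where n: "0 < n" and fam: "is_rel_family ar n R"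
    and w: "w = replicate n True @ [False] @ rel_bits ar n R @ kb" and rm: "RM md ar c psi n R (bits_val kb)"
    unfolding RM_lang_def by blast
  have M: "M = base n + length kb" using lw w unfolding base_def by (simp add: length_rel_bits)
  have nM: "n < M" "base n \<le> M" using M unfolding base_def by auto
  have dw: "drop (base n) w = kb" using w unfolding base_def by (simp add: length_rel_bits)
  have pr: "feval w (pre n)" unfolding pre_def using w by (auto simp: bt_def nth_append)
  obtain xs Sp where xs: "length xs = c" "set xs \<subseteq> {0..<n}" and cr: "crit n R xs Sp (bits_val kb)"
    using main_equiv[OF fam] rm by blast
  have ag: "agree {0..<n} R (Rw ar n w)"
    unfolding agree_def
  proof (intro allI impI)
    fix i t assume i: "i < length ar" and t: "length t = ar ! i" "set t \<subseteq> {0..<n}"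
    then have tt: "t \<in> tuples n (ar ! i)" unfolding tuples_def by simp
    show "(t \<in> R i) = (t \<in> Rw ar n w i)" unfolding Rw_def using pos_bit(2)[OF i tt, of R kb] w tt by simp
  qed
  have cr2: "crit n (Rw ar n w) xs Sp (bits_val (drop (base n) w))" using cr crit_local[OF ag xs] dw by simp
  have Sp: "Sp \<subseteq> TP (set xs)" using cr unfolding crit_def by simp
  have e: "feval w (Ef M n xs Sp)" using Ef_eval[OF xs Sp lw nM(2)] cr2 by simp
  have "xs \<in> set (List.n_lists c [0..<n])" using xs by (auto simp: set_n_lists)
  moreover have "Sp \<in> set (lst (Pow (TP (set xs))))" using Sp lst_spec[of "Pow (TP (set xs))"] finite_TP[of "set xs"] by auto
  ultimately have "feval w (Df M n)" using e unfolding Df_def by force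
  then show "feval w (Fm M)" unfolding Fm_def using n nM pr by force
qed


lemma depth_Fm: "fdepth (Fm M) \<le> 9"
proof -
  have mf: "fdepth (FNot (Mf n xs Sp y j)) \<le> 4" for n xs Sp y j
    using fdepth_dnf unfolding Mf_def by (simp add: Suc_le_mono)
  have tf: "fdepth (Tf M n xs Sp) \<le> 5" for n xs Sp
    unfolding Tf_def
    by (rule fdepth_mkThr[where d=4, simplified]) (use mf in auto)
  have ef: "fdepth (Ef M n xs Sp) \<le> 6" for n xs Sp
    unfolding Ef_def
  proof (rule fdepth_FAnd[where d=5, simplified], intro ballI)
    fix f assume f: "f \<in> set ([Gf n xs Sp] @ map (Ff n xs Sp) (ysl n xs) @ [Tf M n xs Sp])"
    have d3: "fdepth (dnf P Q) \<le> 5" for P Q using fdepth_dnf[of P Q] by simp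
    show "fdepth f \<le> 5" using tf[of n xs Sp] d3 f unfolding Gf_def Ff_def by auto
  qed
  have df: "fdepth (Df M n) \<le> 7" for n
    unfolding Df_def by (rule fdepth_FOr[where d=6, simplified]) (use ef in auto)
  have pr: "fdepth (pre n) \<le> 2" for n
  proof -
    have "fdepth (pre n) \<le> Suc 1" unfolding pre_def by (rule fdepth_FAnd) auto
    then show ?thesis by simp
  qed
  have "fdepth (FAnd [pre n, Df M n]) \<le> 8" for n
    by (rule fdepth_FAnd[where d=7, simplified]) (use pr[of n] df[of n] in auto)
  then show ?thesis unfolding Fm_def by (intro fdepth_FOr[where d=8, simplified]) auto
qed

definition DD where "DD = dsz Bt"
definition K1 where "K1 = 2 + DD + Bt * (DD + 1)"

lemma dnf_sz: "finite A \<Longrightarrow> card A \<le> c + 1 \<Longrightarrow> fsize (dnf (PA n A) Q) \<le> DD"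
  unfolding DD_def using fsize_dnf dsz_mono length_PA le_trans by blast

lemma size_Ef:
  assumes xs: "length xs = c" and nM: "n \<le> M"
  shows "fsize (Ef M n xs Sp) \<le> K1 * (M + 1)"
proof -
  have cx: "card (set xs) \<le> c + 1" using card_length[of xs] xs by simp
  have cy: "card (insert y (set xs)) \<le> c + 1" for y using card_insert_xs[OF xs] .
  have G: "fsize (Gf n xs Sp) \<le> DD" unfolding Gf_def using dnf_sz cx by simp
  have F: "fsize (Ff n xs Sp y) \<le> DD" for y unfolding Ff_def using dnf_sz cy by simp
  have Mfs: "fsize (Mf n xs Sp y j) \<le> DD" for y j unfolding Mf_def using dnf_sz cy by simp
  have N: "length (ysl n xs) \<le> M" unfolding ysl_def
    using length_filter_le[of "\<lambda>y. y \<notin> set xs" "[0..<n]"] nM by (simp del: length_filter_le)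
  have s1: "sum_list (map (fsize \<circ> snd) (map (\<lambda>i. ((2::nat) ^ i, FIn (base n + i))) [0..<M - base n])) \<le> M"
    by (simp add: comp_def sum_list_triv)
  have s2: "sum_list (map (fsize \<circ> snd) (concat (map (\<lambda>y. map (\<lambda>j. (1::nat, FNot (Mf n xs Sp y j))) [0..<Bt]) (ysl n xs))))
      \<le> M * (Bt * (DD + 1))"
  proof -
    have "sum_list (map (fsize \<circ> snd) (map (\<lambda>j. (1::nat, FNot (Mf n xs Sp y j))) [0..<Bt])) \<le> Bt * (DD + 1)" for y
      using sum_list_bound[of "[0..<Bt]" "\<lambda>j. fsize (FNot (Mf n xs Sp y j))" "DD + 1"] Mfs by (simp add: comp_def)
    then have "sum_list (map (\<lambda>xs. sum_list (map (fsize \<circ> snd) xs)) (map (\<lambda>y. map (\<lambda>j. (1::nat, FNot (Mf n xs Sp y j))) [0..<Bt]) (ysl n xs)))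
        \<le> length (ysl n xs) * (Bt * (DD + 1))"
      using sum_list_bound[of "map (\<lambda>y. map (\<lambda>j. (1::nat, FNot (Mf n xs Sp y j))) [0..<Bt]) (ysl n xs)"
          "\<lambda>xs. sum_list (map (fsize \<circ> snd) xs)" "Bt * (DD + 1)"] by auto
    also have "\<dots> \<le> M * (Bt * (DD + 1))" using N by simp
    finally show ?thesis by (simp only: sum_map_concat)
  qed
  have T: "fsize (Tf M n xs Sp) \<le> 1 + M + M * (Bt * (DD + 1))"
    unfolding Tf_def fsize_mkThr using s1 s2 by simp
  have FF: "sum_list (map fsize (map (Ff n xs Sp) (ysl n xs))) \<le> M * DD"
  proof -
    have "sum_list (map fsize (map (Ff n xs Sp) (ysl n xs))) \<le> length (ysl n xs) * DD"
      using sum_list_bound[of "ysl n xs" "\<lambda>y. fsize (Ff n xs Sp y)" DD] F by (simp add: comp_def)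
    also have "\<dots> \<le> M * DD" using N by simp
    finally show ?thesis .
  qed
  have "fsize (Ef M n xs Sp) \<le> 1 + DD + M * DD + (1 + M + M * (Bt * (DD + 1)))"
    unfolding Ef_def fsize_FAnd using G FF T by simp
  also have "\<dots> \<le> K1 * (M + 1)" unfolding K1_def by (simp add: algebra_simps)
  finally show ?thesis .
qed

lemma size_Df:
  assumes nM: "n \<le> M"
  shows "fsize (Df M n) \<le> 1 + M ^ c * (2 ^ Bt * (K1 * (M + 1)))"
proof -
  have inner: "sum_list (map fsize (map (Ef M n xs) (lst (Pow (TP (set xs)))))) \<le> 2 ^ Bt * (K1 * (M + 1))"
    if "xs \<in> set (List.n_lists c [0..<n])" for xs
  proof -
    have xs: "length xs = c" using that by (simp add: length_n_lists_elem)
    have fin: "finite (TP (set xs))" by (rule finite_TP) simp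
    have l: "length (lst (Pow (TP (set xs)))) \<le> 2 ^ Bt"
    proof -
      have "length (lst (Pow (TP (set xs)))) = 2 ^ card (TP (set xs))"
        using length_lst[of "Pow (TP (set xs))"] fin by (simp add: card_Pow)
      also have "\<dots> \<le> 2 ^ Bt" using card_TP_le[of "set xs"] card_length[of xs] xs by simp
      finally show ?thesis .
    qed
    have "sum_list (map fsize (map (Ef M n xs) (lst (Pow (TP (set xs)))))) \<le> length (lst (Pow (TP (set xs)))) * (K1 * (M + 1))"
      using sum_list_bound[of "lst (Pow (TP (set xs)))" "\<lambda>Sp. fsize (Ef M n xs Sp)" "K1 * (M + 1)"] size_Ef[OF xs nM]
      by (simp add: comp_def)
    also have "\<dots> \<le> 2 ^ Bt * (K1 * (M + 1))" using l by (rule mult_right_mono) simp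
    finally show ?thesis .
  qed
  have "sum_list (map fsize (concat (map (\<lambda>xs. map (Ef M n xs) (lst (Pow (TP (set xs))))) (List.n_lists c [0..<n]))))
      = sum_list (map (\<lambda>xs. sum_list (map fsize (map (Ef M n xs) (lst (Pow (TP (set xs))))))) (List.n_lists c [0..<n]))"
    by (simp only: sum_map_concat map_map comp_def)
  also have "\<dots> \<le> length (List.n_lists c [0..<n]) * (2 ^ Bt * (K1 * (M + 1)))"
    by (intro sum_list_bound ballI inner)
  also have "\<dots> \<le> M ^ c * (2 ^ Bt * (K1 * (M + 1)))"
  proof (rule mult_right_mono)
    show "length (List.n_lists c [0..<n]) \<le> M ^ c" unfolding length_n_lists using nM by (simp add: power_mono)
  qed simp
  finally show ?thesis unfolding Df_def fsize_FOr by simp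
qed

definition KK where "KK = 6 + 2 ^ Bt * K1"

lemma size_Fm: "fsize (Fm M) \<le> KK * (M + 1) ^ (c + 2)"
proof -
  let ?Q = "M ^ c * (2 ^ Bt * (K1 * (M + 1)))"
  have pr: "fsize (pre n) = n + 3" for n unfolding pre_def fsize_FAnd by (simp add: comp_def sum_list_triv)
  have each: "fsize (FAnd [pre n, Df M n]) \<le> M + 5 + ?Q" if "n \<in> set (filter (\<lambda>n. 0 < n \<and> base n \<le> M) [0..<M])" for n
  proof -
    have "n < M" using that by simp
    then show ?thesis unfolding fsize_FAnd using pr[of n] size_Df[of n M] by simp
  qed
  have "fsize (Fm M) \<le> 1 + M * (M + 5 + ?Q)"
  proof -
    have "sum_list (map fsize (map (\<lambda>n. FAnd [pre n, Df M n]) (filter (\<lambda>n. 0 < n \<and> base n \<le> M) [0..<M])))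
        \<le> length (filter (\<lambda>n. 0 < n \<and> base n \<le> M) [0..<M]) * (M + 5 + ?Q)"
      using sum_list_bound[of _ "\<lambda>n. fsize (FAnd [pre n, Df M n])"] each by (simp add: comp_def)
    also have "\<dots> \<le> M * (M + 5 + ?Q)"
      using length_filter_le[of _ "[0..<M]"] by (intro mult_right_mono) auto
    finally show ?thesis unfolding Fm_def fsize_FOr by simp
  qed
  also have "\<dots> \<le> KK * (M + 1) ^ (c + 2)"
  proof -
    let ?P = "(M + 1) ^ (c + 2)"
    have p2: "(M + 1) ^ 2 \<le> ?P" by (rule power_increasing) auto
    have a: "1 + M * (M + 5) \<le> 6 * ?P"
    proof -
      have "1 + M * (M + 5) \<le> 6 * (M + 1) ^ 2" by (simp add: power2_eq_square algebra_simps)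
      then show ?thesis using p2 by linarith
    qed
    have b: "M * ?Q \<le> 2 ^ Bt * K1 * ?P"
    proof -
      have "M * ?Q = 2 ^ Bt * K1 * (M * M ^ c * (M + 1))" by (simp add: algebra_simps)
      also have "M * M ^ c * (M + 1) \<le> (M + 1) * (M + 1) ^ c * (M + 1)"
        by (intro mult_mono power_mono) auto
      also have "(M + 1) * (M + 1) ^ c * (M + 1) = ?P" by (simp add: algebra_simps power_add power2_eq_square)
      finally show ?thesis by simp
    qed
    have "1 + M * (M + 5 + ?Q) = (1 + M * (M + 5)) + M * ?Q" by (simp add: algebra_simps)
    also have "\<dots> \<le> 6 * ?P + 2 ^ Bt * K1 * ?P" by (rule add_mono[OF a b])
    also have "\<dots> = KK * ?P" unfolding KK_def by (simp add: algebra_simps)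
    finally show ?thesis .
  qed
  finally show ?thesis .
qed

end

lemma poly_bound: "(K::nat) * (M + 1) ^ p \<le> M ^ (K * 2 ^ p + p) + (K * 2 ^ p + p)"
proof (cases "M = 0")
  case True
  have "K * 1 \<le> K * 2 ^ p" by (intro mult_left_mono) auto
  then have "K \<le> 0 ^ (K * 2 ^ p + p) + (K * 2 ^ p + p)" by linarith
  then show ?thesis using True by simp
next
  case False
  let ?a = "K * 2 ^ p"
  have "K * (M + 1) ^ p \<le> K * (2 * M) ^ p"
    using False by (intro mult_left_mono power_mono) auto
  also have "\<dots> = ?a * M ^ p" by (simp add: power_mult_distrib)
  also have "\<dots> \<le> M ^ (?a + p) + (?a + p)"
  proof (cases "M = 1")
    case True then show ?thesis by simp
  next
    case False
    then have M2: "2 \<le> M" using \<open>M \<noteq> 0\<close> by simp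
    have "?a < 2 ^ ?a" by (rule less_exp)
    also have "\<dots> \<le> M ^ ?a" using M2 by (rule power_mono) simp
    finally have "?a \<le> M ^ ?a" by simp
    then have "?a * M ^ p \<le> M ^ ?a * M ^ p" by (rule mult_right_mono) simp
    also have "\<dots> = M ^ (?a + p)" by (simp add: power_add)
    finally show ?thesis by linarith
  qed
  finally show ?thesis .
qed

theorem lemma4p3:
  fixes m :: mode and ar :: "nat list" and c :: nat and psi :: qf
  assumes "qf_wf ar c psi"
  shows "TC0 (RM_lang m ar c psi)"
proof -
  let ?F = "Fm ar c psi m"
  let ?K = "KK ar c"
  let ?e = "?K * 2 ^ (c + 2) + (c + 2)"
  have ev: "\<And>M w. length w = M \<Longrightarrow> feval w (?F M) = (w \<in> RM_lang m ar c psi)"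
    by (rule Fm_correct[OF assms])
  have sz: "\<And>M. fsize (?F M) \<le> M ^ ?e + ?e"
    using size_Fm[OF assms] poly_bound le_trans by blast
  have dp: "\<And>M. fdepth (?F M) \<le> 9"
    by (rule depth_Fm[OF assms])
  show ?thesis by (rule fm_TC0[OF ev sz dp])
qed


end
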